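(* Let $\tau\in(0,1]$. Suppose $Y=\mu+\xi$, where $\mu=\mu_n\in\mathbb{R}^n$ and $Z=Z_n\in\mathbb{R}^{n\times p}$ are deterministic, $\xi\in\mathbb{R}^n$ is sub-Gaussian with parameter $K_\xi$, $\|\mu\|^2=\mathcal O(n)$, and $\mu$ is weakly sparse relative to $Z$ with sparsity $s$ at rate $n^\tau$. Let $u\ge s$ for all large $n$ with $u=o(n^\tau/\log p)$, let $\alpha>4K_\xi^2$ be fixed, and let $w_m=w_m(Y;u,\alpha)$. Let $\zeta\in\mathbb R^n$ be any sub-Gaussian random vector with parameter $K_\zeta$ (a fixed constant; $\zeta$ may depend on $\xi$). Then 1. $\mathbb E\big(\sum_{m\in\mathcal M_u}w_m\|P_m^\perp\mu\|^2\big)=o(n^\tau)$; 2. $\mathbb E\big(\sum_{m\in\mathcal M_u}w_m\,\mu^\top P_m^\perp\zeta\big)=o(n^\tau)$.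
   Context: Asymptotics are as $n\to\infty$; $p=p_n$ and all other quantities may depend on $n$. For $u\in\mathbb N$, $\mathcal M_u=\{m\subseteq\{1,\dots,p\}:|m|=u\}$; for $m\in\mathcal M_u$, $Z_m$ is the $n\times u$ submatrix of $Z$ with columns indexed by $m$, $P_m$ is the orthogonal projection of $\mathbb R^n$ onto the column space of $Z_m$, and $P_m^\perp=I_n-P_m$. Weak sparsity: a sequence $\mu=\mu_n\in\mathbb R^n$ is weakly sparse relative to $Z$ with sparsity $s=s_n$ at rate $k=k_n$ if there exist sets $S=S_n\in\mathcal M_s$ with $\|P_S^\perp\mu\|^2=o(k)$. Sub-Gaussian: a mean-zero random vector $\xi\in\mathbb R^n$ is sub-Gaussian with parameter $K$ if $\mathbb E\exp(\lambda^\top\xi)\le\exp(K^2\|\lambda\|^2/2)$ for all $\lambda\in\mathbb R^n$. Exponential weights: $w_m(V;u,\alpha)=\exp(-\|P_m^\perp V\|^2/\alpha)\big/\sum_{k\in\mathcal M_u}\exp(-\|P_k^\perp V\|^2/\alpha)$ for $V\in\mathbb R^n$, $m\in\mathcal M_u$. *)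

theory Defs
  imports "HOL-Probability.Probability" "HOL-Library.Landau_Symbols"
begin

text \<open>Vectors in R^n are represented as functions nat => real, of which only
  the coordinates i < n matter. An n x p matrix is a function nat => nat => real,
  entry (i,j) with i < n, j < p. Column indices are 0-based: {0..<p}.\<close>

definition vinner :: "nat \<Rightarrow> (nat \<Rightarrow> real) \<Rightarrow> (nat \<Rightarrow> real) \<Rightarrow> real" where
  "vinner n x y = (\<Sum>i<n. x i * y i)"

definition vnorm2 :: "nat \<Rightarrow> (nat \<Rightarrow> real) \<Rightarrow> real" where
  "vnorm2 n x = vinner n x x"

definition models :: "nat \<Rightarrow> nat \<Rightarrow> nat set set" where
  "models p u = {m. m \<subseteq> {0..<p} \<and> card m = u}"

definition colspace :: "nat \<Rightarrow> (nat \<Rightarrow> nat \<Rightarrow> real) \<Rightarrow> nat set \<Rightarrow> (nat \<Rightarrow> real) set" where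
  "colspace n Z m = {v. (\<forall>i\<ge>n. v i = 0) \<and>
      (\<exists>\<beta>::nat \<Rightarrow> real. \<forall>i<n. v i = (\<Sum>j\<in>m. Z i j * \<beta> j))}"

definition proj :: "nat \<Rightarrow> (nat \<Rightarrow> nat \<Rightarrow> real) \<Rightarrow> nat set \<Rightarrow> (nat \<Rightarrow> real) \<Rightarrow> (nat \<Rightarrow> real)" where
  "proj n Z m V = (THE w. w \<in> colspace n Z m \<and>
      (\<forall>c\<in>colspace n Z m. vinner n (\<lambda>i. V i - w i) c = 0))"

definition projperp :: "nat \<Rightarrow> (nat \<Rightarrow> nat \<Rightarrow> real) \<Rightarrow> nat set \<Rightarrow> (nat \<Rightarrow> real) \<Rightarrow> (nat \<Rightarrow> real)" where
  "projperp n Z m V = (\<lambda>i. V i - proj n Z m V i)"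

definition expweight :: "nat \<Rightarrow> nat \<Rightarrow> (nat \<Rightarrow> nat \<Rightarrow> real) \<Rightarrow> nat \<Rightarrow> real \<Rightarrow> (nat \<Rightarrow> real) \<Rightarrow> nat set \<Rightarrow> real" where
  "expweight n p Z u \<alpha> V m =
     exp (- vnorm2 n (projperp n Z m V) / \<alpha>) /
     (\<Sum>k\<in>models p u. exp (- vnorm2 n (projperp n Z k V) / \<alpha>))"

definition weakly_sparse ::
  "(nat \<Rightarrow> nat \<Rightarrow> real) \<Rightarrow> (nat \<Rightarrow> nat \<Rightarrow> nat \<Rightarrow> real) \<Rightarrow> (nat \<Rightarrow> nat) \<Rightarrow> (nat \<Rightarrow> nat)
     \<Rightarrow> (nat \<Rightarrow> real) \<Rightarrow> bool" where
  "weakly_sparse \<mu> Z p s k \<longleftrightarrow>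
     (\<exists>S::nat \<Rightarrow> nat set. (\<forall>n. S n \<in> models (p n) (s n)) \<and>
        (\<lambda>n. vnorm2 n (projperp n (Z n) (S n) (\<mu> n))) \<in> o(k))"

definition random_vec :: "'a measure \<Rightarrow> nat \<Rightarrow> ('a \<Rightarrow> nat \<Rightarrow> real) \<Rightarrow> bool" where
  "random_vec M n \<xi> \<longleftrightarrow> (\<forall>i<n. (\<lambda>\<omega>. \<xi> \<omega> i) \<in> borel_measurable M)"

definition subgaussian :: "'a measure \<Rightarrow> nat \<Rightarrow> ('a \<Rightarrow> nat \<Rightarrow> real) \<Rightarrow> real \<Rightarrow> bool" where
  "subgaussian M n \<xi> K \<longleftrightarrow> random_vec M n \<xi> \<and>
     (\<forall>i<n. integrable M (\<lambda>\<omega>. \<xi> \<omega> i) \<and> (\<integral>\<omega>. \<xi> \<omega> i \<partial>M) = 0) \<and>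
     (\<forall>l::nat \<Rightarrow> real. integrable M (\<lambda>\<omega>. exp (vinner n l (\<xi> \<omega>))) \<and>
        (\<integral>\<omega>. exp (vinner n l (\<xi> \<omega>)) \<partial>M) \<le> exp (K\<^sup>2 * vnorm2 n l / 2))"

end

theory Submission
  imports Defs
begin


lemma vinner_sym: "vinner n x y = vinner n y x"
  by (simp add: vinner_def mult.commute)

lemma vinner_cong: "(\<And>i. i < n \<Longrightarrow> x i = x' i) \<Longrightarrow> (\<And>i. i < n \<Longrightarrow> y i = y' i)
  \<Longrightarrow> vinner n x y = vinner n x' y'"
  unfolding vinner_def by (intro sum.cong) auto

lemma vinner_add_left: "vinner n (\<lambda>i. x i + y i) z = vinner n x z + vinner n y z"
  by (simp add: vinner_def algebra_simps sum.distrib)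

lemma vinner_diff_left: "vinner n (\<lambda>i. x i - y i) z = vinner n x z - vinner n y z"
  by (simp add: vinner_def algebra_simps sum_subtractf)

lemma vinner_scale_left: "vinner n (\<lambda>i. c * x i) z = c * vinner n x z"
  by (simp add: vinner_def sum_distrib_left algebra_simps)

lemma vinner_sum_left: "vinner n (\<lambda>i. \<Sum>k\<in>K. f k i) z = (\<Sum>k\<in>K. vinner n (f k) z)"
  unfolding vinner_def sum_distrib_right by (rule sum.swap)

lemma vinner_add_right: "vinner n z (\<lambda>i. x i + y i) = vinner n z x + vinner n z y"
  by (simp add: vinner_def algebra_simps sum.distrib)

lemma vinner_diff_right: "vinner n z (\<lambda>i. x i - y i) = vinner n z x - vinner n z y"
  by (simp add: vinner_def algebra_simps sum_subtractf)

lemma vinner_scale_right: "vinner n z (\<lambda>i. c * x i) = c * vinner n z x"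
  by (simp add: vinner_def sum_distrib_left algebra_simps)

lemma vinner_sum_right: "vinner n z (\<lambda>i. \<Sum>k\<in>K. f k i) = (\<Sum>k\<in>K. vinner n z (f k))"
  unfolding vinner_def sum_distrib_left by (rule sum.swap)

lemma vnorm2_nonneg: "0 \<le> vnorm2 n x"
  by (simp add: vnorm2_def vinner_def sum_nonneg)

lemma vnorm2_zero: "vnorm2 n x = 0 \<Longrightarrow> i < n \<Longrightarrow> x i = 0"
  unfolding vnorm2_def vinner_def
  by (subst (asm) sum_nonneg_eq_0_iff) auto

lemma vinner_zero_left: "(\<And>i. i < n \<Longrightarrow> x i = 0) \<Longrightarrow> vinner n x y = 0"
  by (simp add: vinner_def)

definition col :: "nat \<Rightarrow> (nat \<Rightarrow> nat \<Rightarrow> real) \<Rightarrow> nat \<Rightarrow> nat \<Rightarrow> real" where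
  "col n Z j = (\<lambda>i. if i < n then Z i j else 0)"

lemma colspace_iff: "v \<in> colspace n Z m \<longleftrightarrow> (\<forall>i\<ge>n. v i = 0) \<and>
      (\<exists>\<beta>::nat \<Rightarrow> real. \<forall>i<n. v i = (\<Sum>j\<in>m. Z i j * \<beta> j))"
  by (simp add: colspace_def)

lemma colspace_outside: "v \<in> colspace n Z m \<Longrightarrow> \<not> i < n \<Longrightarrow> v i = 0"
  by (simp add: colspace_def)

lemma colspace_zero: "(\<lambda>i. 0) \<in> colspace n Z m"
  unfolding colspace_iff by (rule conjI, simp, rule exI[of _ "\<lambda>_. 0"]) simp

lemma colspace_add: "x \<in> colspace n Z m \<Longrightarrow> y \<in> colspace n Z m \<Longrightarrow> (\<lambda>i. x i + y i) \<in> colspace n Z m"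
  unfolding colspace_iff
proof (elim conjE exE, intro conjI)
  fix b1 b2 assume "\<forall>i<n. x i = (\<Sum>j\<in>m. Z i j * b1 j)" "\<forall>i<n. y i = (\<Sum>j\<in>m. Z i j * b2 j)"
  then show "\<exists>\<beta>. \<forall>i<n. x i + y i = (\<Sum>j\<in>m. Z i j * \<beta> j)"
    by (intro exI[of _ "\<lambda>j. b1 j + b2 j"]) (simp add: algebra_simps sum.distrib)
qed auto

lemma colspace_scale: "x \<in> colspace n Z m \<Longrightarrow> (\<lambda>i. c * x i) \<in> colspace n Z m"
  unfolding colspace_iff
proof (elim conjE exE, intro conjI)
  fix b1 assume "\<forall>i<n. x i = (\<Sum>j\<in>m. Z i j * b1 j)"
  then show "\<exists>\<beta>. \<forall>i<n. c * x i = (\<Sum>j\<in>m. Z i j * \<beta> j)"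
    by (intro exI[of _ "\<lambda>j. c * b1 j"]) (simp add: algebra_simps sum_distrib_left)
qed auto

lemma colspace_diff: "x \<in> colspace n Z m \<Longrightarrow> y \<in> colspace n Z m \<Longrightarrow> (\<lambda>i. x i - y i) \<in> colspace n Z m"
  using colspace_add[of x n Z m "\<lambda>i. (-1) * y i"] colspace_scale[of y n Z m "-1"] by simp

lemma colspace_sum: "finite K \<Longrightarrow> (\<And>k. k \<in> K \<Longrightarrow> f k \<in> colspace n Z m)
   \<Longrightarrow> (\<lambda>i. \<Sum>k\<in>K. c k * f k i) \<in> colspace n Z m"
proof (induction K rule: finite_induct)
  case empty then show ?case using colspace_zero by simp
next
  case (insert k K)
  have "(\<lambda>i. c k * f k i + (\<Sum>k\<in>K. c k * f k i)) \<in> colspace n Z m"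
    using insert by (intro colspace_add colspace_scale) auto
  then show ?case using insert by simp
qed

lemma colspace_col: "j \<in> m \<Longrightarrow> finite m \<Longrightarrow> col n Z j \<in> colspace n Z m"
  unfolding colspace_iff col_def
proof (intro conjI, simp, rule exI[of _ "\<lambda>k. if k = j then 1 else 0"], intro allI impI)
  fix i assume "j \<in> m" "finite m" "i < n"
  have "(\<Sum>k\<in>m. Z i k * (if k = j then 1 else 0)) = (\<Sum>k\<in>m. if k = j then Z i k else 0)"
    by (intro sum.cong) auto
  also have "\<dots> = Z i j" using \<open>j \<in> m\<close> \<open>finite m\<close> by simp
  finally show "(if i < n then Z i j else 0) = (\<Sum>k\<in>m. Z i k * (if k = j then 1 else 0))"
    using \<open>i < n\<close> by simp
qed

lemma colspace_mono: "finite m' \<Longrightarrow> m \<subseteq> m' \<Longrightarrow> colspace n Z m \<subseteq> colspace n Z m'"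
proof
  fix v assume fin: "finite m'" and sub: "m \<subseteq> m'" and v: "v \<in> colspace n Z m"
  then obtain \<beta> where b: "\<forall>i<n. v i = (\<Sum>j\<in>m. Z i j * \<beta> j)" and o: "\<forall>i\<ge>n. v i = 0"
    unfolding colspace_iff by auto
  have "\<forall>i<n. v i = (\<Sum>j\<in>m'. Z i j * (if j \<in> m then \<beta> j else 0))"
  proof (intro allI impI)
    fix i assume "i < n"
    have "(\<Sum>j\<in>m'. Z i j * (if j \<in> m then \<beta> j else 0)) = (\<Sum>j\<in>m. Z i j * (if j \<in> m then \<beta> j else 0))"
      by (rule sum.mono_neutral_right) (use fin sub in auto)
    also have "\<dots> = (\<Sum>j\<in>m. Z i j * \<beta> j)" by simp
    finally show "v i = (\<Sum>j\<in>m'. Z i j * (if j \<in> m then \<beta> j else 0))" using b \<open>i < n\<close> by simp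
  qed
  then show "v \<in> colspace n Z m'" unfolding colspace_iff
    apply (intro conjI) using o apply simp by (rule exI, assumption)
qed

lemma colspace_insert_decomp:
  assumes "v \<in> colspace n Z (insert j m)" "j \<notin> m" "finite m"
  shows "\<exists>b c'. c' \<in> colspace n Z m \<and> (\<forall>i<n. v i = b * col n Z j i + c' i)"
proof -
  obtain \<beta> where b: "\<forall>i<n. v i = (\<Sum>k\<in>insert j m. Z i k * \<beta> k)"
    using assms(1) unfolding colspace_iff by auto
  define c' where "c' = (\<lambda>i. if i < n then (\<Sum>k\<in>m. Z i k * \<beta> k) else 0)"
  have "c' \<in> colspace n Z m" unfolding colspace_iff c'_def by auto
  moreover have "\<forall>i<n. v i = \<beta> j * col n Z j i + c' i"
    using b assms(2,3) by (simp add: c'_def col_def)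
  ultimately show ?thesis by blast
qed

definition orthonormal :: "nat \<Rightarrow> (nat \<Rightarrow> real) set \<Rightarrow> bool" where
  "orthonormal n E \<longleftrightarrow> (\<forall>e\<in>E. \<forall>e'\<in>E. vinner n e e' = (if e = e' then 1 else 0))"

lemma orthonormal_coeff:
  assumes "finite E" "orthonormal n E" "\<And>i. i < n \<Longrightarrow> c i = (\<Sum>e\<in>E. \<gamma> e * e i)" "e \<in> E"
  shows "vinner n e c = \<gamma> e"
proof -
  have "vinner n e c = vinner n e (\<lambda>i. \<Sum>e'\<in>E. \<gamma> e' * e' i)"
    by (rule vinner_cong) (use assms(3) in auto)
  also have "\<dots> = (\<Sum>e'\<in>E. \<gamma> e' * vinner n e e')"
    by (simp add: vinner_sum_right vinner_scale_right)
  also have "\<dots> = (\<Sum>e'\<in>E. if e' = e then \<gamma> e' else 0)"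
    using assms(2,4) unfolding orthonormal_def by (intro sum.cong) auto
  also have "\<dots> = \<gamma> e" using assms(1,4) by simp
  finally show ?thesis .
qed

definition obasis :: "nat \<Rightarrow> (nat \<Rightarrow> nat \<Rightarrow> real) \<Rightarrow> nat set \<Rightarrow> (nat \<Rightarrow> real) set \<Rightarrow> bool" where
  "obasis n Z m E \<longleftrightarrow> finite E \<and> card E \<le> card m \<and> E \<subseteq> colspace n Z m \<and> orthonormal n E \<and>
     (\<forall>c\<in>colspace n Z m. \<exists>\<gamma>. \<forall>i<n. c i = (\<Sum>e\<in>E. \<gamma> e * e i))"

lemma obasis_exists:
  assumes "finite m" shows "\<exists>E. obasis n Z m E"
  using assms
proof (induction m rule: finite_induct)
  case empty
  have "colspace n Z {} = {\<lambda>i. 0}"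
  proof (intro set_eqI iffI)
    fix v assume "v \<in> colspace n Z {}"
    then have "\<forall>i. v i = 0" unfolding colspace_iff by (metis not_le sum.empty)
    then show "v \<in> {\<lambda>i. 0}" by auto
  qed (use colspace_zero in auto)
  then have "obasis n Z {} {}"
    unfolding obasis_def orthonormal_def by auto
  then show ?case by blast
next
  case (insert j m)
  then obtain E where E: "obasis n Z m E" by blast
  define cj where "cj = col n Z j"
  define z where "z = (\<lambda>i. cj i - (\<Sum>e\<in>E. vinner n e cj * e i))"
  have finE: "finite E" and cardE: "card E \<le> card m" and Esub: "E \<subseteq> colspace n Z m"
    and orth: "orthonormal n E"
    and span: "\<forall>c\<in>colspace n Z m. \<exists>\<gamma>. \<forall>i<n. c i = (\<Sum>e\<in>E. \<gamma> e * e i)"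
    using E by (auto simp: obasis_def)
  have sub: "colspace n Z m \<subseteq> colspace n Z (insert j m)"
    by (rule colspace_mono) (use insert in auto)
  have cj_in: "cj \<in> colspace n Z (insert j m)" using colspace_col insert cj_def by auto
  have Esub': "E \<subseteq> colspace n Z (insert j m)" using Esub sub by auto
  have sum_in: "(\<lambda>i. \<Sum>e\<in>E. vinner n e cj * e i) \<in> colspace n Z (insert j m)"
    by (rule colspace_sum) (use finE Esub' in auto)
  have z_in: "z \<in> colspace n Z (insert j m)"
    unfolding z_def by (rule colspace_diff[OF cj_in sum_in])
  have z_orth: "vinner n e z = 0" if "e \<in> E" for e
  proof -
    have "vinner n e z = vinner n e cj - (\<Sum>e'\<in>E. vinner n e' cj * vinner n e e')"
      unfolding z_def by (simp add: vinner_diff_right vinner_sum_right vinner_scale_right)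
    also have "(\<Sum>e'\<in>E. vinner n e' cj * vinner n e e') = (\<Sum>e'\<in>E. if e' = e then vinner n e' cj else 0)"
      using orth that unfolding orthonormal_def by (intro sum.cong) auto
    also have "\<dots> = vinner n e cj" using finE that by simp
    finally show ?thesis by simp
  qed
  have decomp: "\<exists>b \<gamma>. \<forall>i<n. c i = b * cj i + (\<Sum>e\<in>E. \<gamma> e * e i)"
    if cin: "c \<in> colspace n Z (insert j m)" for c
  proof -
    obtain b c' where c': "c' \<in> colspace n Z m" "\<forall>i<n. c i = b * col n Z j i + c' i"
      using colspace_insert_decomp[OF cin insert(2,1)] by blast
    obtain \<gamma> where g: "\<forall>i<n. c' i = (\<Sum>e\<in>E. \<gamma> e * e i)" using span c'(1) by blast
    show ?thesis using c'(2) g unfolding cj_def by (intro exI[of _ b] exI[of _ \<gamma>]) simp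
  qed
  show ?case
  proof (cases "vnorm2 n z = 0")
    case True
    then have z0: "\<And>i. i < n \<Longrightarrow> z i = 0" using vnorm2_zero by blast
    have "obasis n Z (insert j m) E"
      unfolding obasis_def
    proof (intro conjI ballI)
      show "finite E" by fact
      show "card E \<le> card (insert j m)" using cardE insert by simp
      show "E \<subseteq> colspace n Z (insert j m)" by fact
      show "orthonormal n E" by fact
      fix c assume "c \<in> colspace n Z (insert j m)"
      then obtain b \<gamma> where bg: "\<forall>i<n. c i = b * cj i + (\<Sum>e\<in>E. \<gamma> e * e i)" using decomp by blast
      have "\<forall>i<n. c i = (\<Sum>e\<in>E. (b * vinner n e cj + \<gamma> e) * e i)"
      proof (intro allI impI)
        fix i assume i: "i < n"
        have "cj i = (\<Sum>e\<in>E. vinner n e cj * e i)" using z0[OF i] unfolding z_def by simp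
        then show "c i = (\<Sum>e\<in>E. (b * vinner n e cj + \<gamma> e) * e i)"
          using bg i by (simp add: algebra_simps sum.distrib sum_distrib_left)
      qed
      then show "\<exists>\<gamma>. \<forall>i<n. c i = (\<Sum>e\<in>E. \<gamma> e * e i)"
        by (intro exI[of _ "\<lambda>e. b * vinner n e cj + \<gamma> e"]) simp
    qed
    then show ?thesis by blast
  next
    case False
    define N where "N = sqrt (vnorm2 n z)"
    have Npos: "N > 0" using False vnorm2_nonneg[of n z] unfolding N_def by simp
    define q where "q = (\<lambda>i. (1 / N) * z i)"
    have q_in: "q \<in> colspace n Z (insert j m)" unfolding q_def by (rule colspace_scale[OF z_in])
    have qq: "vinner n q q = 1"
    proof -
      have "vinner n q q = (1/N) * (1/N) * vnorm2 n z"
        unfolding q_def vnorm2_def vinner_scale_left vinner_scale_right by simp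
      also have "vnorm2 n z = N^2" unfolding N_def using vnorm2_nonneg[of n z] by simp
      finally show ?thesis using Npos by (simp add: power2_eq_square)
    qed
    have qe: "vinner n e q = 0" if "e \<in> E" for e
      unfolding q_def vinner_scale_right using z_orth[OF that] by simp
    have qE: "q \<notin> E" using qe qq by fastforce
    have "obasis n Z (insert j m) (insert q E)"
      unfolding obasis_def
    proof (intro conjI ballI)
      show "finite (insert q E)" using finE by simp
      show "card (insert q E) \<le> card (insert j m)" using cardE insert finE qE by simp
      show "insert q E \<subseteq> colspace n Z (insert j m)" using q_in Esub' by auto
      show "orthonormal n (insert q E)"
        unfolding orthonormal_def
      proof (intro ballI)
        fix e e' assume ee: "e \<in> insert q E" "e' \<in> insert q E"
        have qe': "vinner n q e = 0" if "e \<in> E" for e using qe[OF that] vinner_sym[of n q e] by simp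
        show "vinner n e e' = (if e = e' then 1 else 0)"
        proof (cases "e = q")
          case True
          then show ?thesis using ee qq qe' qE by auto
        next
          case False
          then have "e \<in> E" using ee by auto
          then show ?thesis using ee qe orth qE unfolding orthonormal_def by auto
        qed
      qed
      fix c assume "c \<in> colspace n Z (insert j m)"
      then obtain b \<gamma> where bg: "\<forall>i<n. c i = b * cj i + (\<Sum>e\<in>E. \<gamma> e * e i)" using decomp by blast
      define \<gamma>' where "\<gamma>' = (\<lambda>e. if e = q then b * N else b * vinner n e cj + \<gamma> e)"
      have "\<forall>i<n. c i = (\<Sum>e\<in>insert q E. \<gamma>' e * e i)"
      proof (intro allI impI)
        fix i assume i: "i < n"
        have cj: "cj i = N * q i + (\<Sum>e\<in>E. vinner n e cj * e i)" using Npos unfolding q_def z_def by simp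
        have "(\<Sum>e\<in>insert q E. \<gamma>' e * e i) = b * N * q i + (\<Sum>e\<in>E. (b * vinner n e cj + \<gamma> e) * e i)"
          using finE qE by (simp add: \<gamma>'_def) (intro sum.cong, auto)
        then show "c i = (\<Sum>e\<in>insert q E. \<gamma>' e * e i)"
          using bg i cj by (simp add: algebra_simps sum.distrib sum_distrib_left)
      qed
      then show "\<exists>\<gamma>. \<forall>i<n. c i = (\<Sum>e\<in>insert q E. \<gamma> e * e i)"
        by (intro exI[of _ \<gamma>']) simp
    qed
    then show ?thesis by blast
  qed
qed


definition ob :: "nat \<Rightarrow> (nat \<Rightarrow> nat \<Rightarrow> real) \<Rightarrow> nat set \<Rightarrow> (nat \<Rightarrow> real) set" where
  "ob n Z m = (SOME E. obasis n Z m E)"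

lemma ob: "finite m \<Longrightarrow> obasis n Z m (ob n Z m)"
  unfolding ob_def using obasis_exists by (rule someI_ex)

lemma obasis_expand:
  assumes "obasis n Z m E" "c \<in> colspace n Z m" "i < n"
  shows "c i = (\<Sum>e\<in>E. vinner n e c * e i)"
proof -
  from assms obtain \<gamma> where g: "\<forall>i<n. c i = (\<Sum>e\<in>E. \<gamma> e * e i)" unfolding obasis_def by blast
  have "\<gamma> e = vinner n e c" if "e \<in> E" for e
    using orthonormal_coeff[of E n c \<gamma> e] assms(1) g that unfolding obasis_def by auto
  then show ?thesis using g assms(3) by (auto intro: sum.cong)
qed

lemma colspace_inner:
  assumes "obasis n Z m E" "c \<in> colspace n Z m"
  shows "vinner n y c = (\<Sum>e\<in>E. vinner n e y * vinner n e c)"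
proof -
  have "vinner n y c = vinner n y (\<lambda>i. \<Sum>e\<in>E. vinner n e c * e i)"
    by (rule vinner_cong) (use obasis_expand[OF assms] in auto)
  also have "\<dots> = (\<Sum>e\<in>E. vinner n e c * vinner n y e)"
    by (simp add: vinner_sum_right vinner_scale_right)
  also have "\<dots> = (\<Sum>e\<in>E. vinner n e y * vinner n e c)"
    by (intro sum.cong) (auto simp: vinner_sym[of n y])
  finally show ?thesis .
qed

lemma proj_eq:
  assumes "obasis n Z m E"
  shows "proj n Z m V = (\<lambda>i. \<Sum>e\<in>E. vinner n e V * e i)"
proof -
  define w where "w = (\<lambda>i. \<Sum>e\<in>E. vinner n e V * e i)"
  have finE: "finite E" and Esub: "E \<subseteq> colspace n Z m" and orth: "orthonormal n E"
    using assms unfolding obasis_def by auto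
  have w_in: "w \<in> colspace n Z m" unfolding w_def by (rule colspace_sum) (use finE Esub in auto)
  have we: "vinner n e w = vinner n e V" if "e \<in> E" for e
    using orthonormal_coeff[OF finE orth, of w "\<lambda>e. vinner n e V" e] that unfolding w_def by simp
  have w_orth: "vinner n (\<lambda>i. V i - w i) c = 0" if "c \<in> colspace n Z m" for c
  proof -
    have "vinner n (\<lambda>i. V i - w i) c = (\<Sum>e\<in>E. vinner n e (\<lambda>i. V i - w i) * vinner n e c)"
      by (rule colspace_inner[OF assms that])
    also have "\<dots> = 0" using we by (simp add: vinner_diff_right)
    finally show ?thesis .
  qed
  have "proj n Z m V = w"
    unfolding proj_def
  proof (rule the_equality)
    show "w \<in> colspace n Z m \<and> (\<forall>c\<in>colspace n Z m. vinner n (\<lambda>i. V i - w i) c = 0)"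
      using w_in w_orth by blast
    fix w' assume w': "w' \<in> colspace n Z m \<and> (\<forall>c\<in>colspace n Z m. vinner n (\<lambda>i. V i - w' i) c = 0)"
    define d where "d = (\<lambda>i. w' i - w i)"
    have d_in: "d \<in> colspace n Z m" unfolding d_def using colspace_diff w' w_in by blast
    have "vinner n (\<lambda>i. V i - w i) d - vinner n (\<lambda>i. V i - w' i) d = vinner n d d"
      unfolding d_def by (simp add: vinner_diff_left algebra_simps)
    then have "vnorm2 n d = 0" using w_orth[OF d_in] w' d_in unfolding vnorm2_def by simp
    then have "d i = 0" for i
      using vnorm2_zero[of n d i] colspace_outside[OF d_in, of i] by (cases "i < n") auto
    then show "w' = w" unfolding d_def by auto
  qed
  then show ?thesis unfolding w_def .
qed

lemma proj_in: "finite m \<Longrightarrow> proj n Z m V \<in> colspace n Z m"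
  using proj_eq[OF ob] ob[of m n Z] unfolding obasis_def
  by (auto intro!: colspace_sum)

lemma projperp_eq:
  "obasis n Z m E \<Longrightarrow> projperp n Z m V = (\<lambda>i. V i - (\<Sum>e\<in>E. vinner n e V * e i))"
  unfolding projperp_def using proj_eq by simp

lemma vinner_projperp_left:
  assumes "obasis n Z m E"
  shows "vinner n (projperp n Z m A) B = vinner n A B - (\<Sum>e\<in>E. vinner n e A * vinner n e B)"
  unfolding projperp_eq[OF assms] vinner_diff_left vinner_sum_left vinner_scale_left by simp

lemma vinner_projperp_right:
  assumes "obasis n Z m E"
  shows "vinner n A (projperp n Z m B) = vinner n A B - (\<Sum>e\<in>E. vinner n e A * vinner n e B)"
  unfolding projperp_eq[OF assms] vinner_diff_right vinner_sum_right vinner_scale_right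
  by (simp add: vinner_sym[of n A] mult.commute)

lemma vnorm2_projperp:
  assumes "obasis n Z m E"
  shows "vnorm2 n (projperp n Z m V) = vnorm2 n V - (\<Sum>e\<in>E. (vinner n e V)\<^sup>2)"
proof -
  have fin: "finite E" and orth: "orthonormal n E" using assms unfolding obasis_def by auto
  have "vnorm2 n (projperp n Z m V) = vinner n V (projperp n Z m V) - (\<Sum>e\<in>E. vinner n e V * vinner n e (projperp n Z m V))"
    unfolding vnorm2_def by (rule vinner_projperp_left[OF assms])
  also have "vinner n e (projperp n Z m V) = 0" if "e \<in> E" for e
  proof -
    have "vinner n e (projperp n Z m V) = vinner n e V - (\<Sum>e'\<in>E. vinner n e' e * vinner n e' V)"
      by (rule vinner_projperp_right[OF assms])
    also have "(\<Sum>e'\<in>E. vinner n e' e * vinner n e' V) = (\<Sum>e'\<in>E. if e' = e then vinner n e' V else 0)"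
      using orth that unfolding orthonormal_def by (intro sum.cong) auto
    also have "\<dots> = vinner n e V" using fin that by simp
    finally show ?thesis by simp
  qed
  then have "(\<Sum>e\<in>E. vinner n e V * vinner n e (projperp n Z m V)) = 0" by simp
  also have "vinner n V (projperp n Z m V) = vnorm2 n V - (\<Sum>e\<in>E. (vinner n e V)\<^sup>2)"
    unfolding vinner_projperp_right[OF assms] vnorm2_def by (simp add: power2_eq_square)
  finally show ?thesis by simp
qed

lemma projperp_min:
  assumes "finite m" "c \<in> colspace n Z m"
  shows "vnorm2 n (projperp n Z m V) \<le> vnorm2 n (\<lambda>i. V i - c i)"
proof -
  let ?E = "ob n Z m"
  have E: "obasis n Z m ?E" using ob[OF assms(1)] .
  define r where "r = projperp n Z m V"
  define d where "d = (\<lambda>i. proj n Z m V i - c i)"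
  have d_in: "d \<in> colspace n Z m" unfolding d_def using colspace_diff proj_in assms by blast
  have rd: "vinner n r d = 0"
  proof -
    have "vinner n r d = vinner n V d - (\<Sum>e\<in>?E. vinner n e V * vinner n e d)"
      unfolding r_def by (rule vinner_projperp_left[OF E])
    also have "vinner n V d = (\<Sum>e\<in>?E. vinner n e V * vinner n e d)"
      by (rule colspace_inner[OF E d_in])
    finally show ?thesis by simp
  qed
  have "vnorm2 n (\<lambda>i. V i - c i) = vnorm2 n (\<lambda>i. r i + d i)"
    unfolding r_def d_def projperp_def vnorm2_def by simp
  also have "\<dots> = vnorm2 n r + 2 * vinner n r d + vnorm2 n d"
    unfolding vnorm2_def vinner_add_left vinner_add_right using vinner_sym[of n d r] by simp
  finally show ?thesis using rd vnorm2_nonneg[of n d] unfolding r_def by simp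
qed

lemma projperp_mono:
  assumes "finite m'" "m \<subseteq> m'"
  shows "vnorm2 n (projperp n Z m' V) \<le> vnorm2 n (projperp n Z m V)"
proof -
  have fm: "finite m" using assms finite_subset by blast
  have "proj n Z m V \<in> colspace n Z m'" using proj_in[OF fm] colspace_mono[OF assms] by blast
  from projperp_min[OF assms(1) this] show ?thesis unfolding projperp_def .
qed



definition "GN = density lborel (\<lambda>x. ennreal (std_normal_density x))"

lemma prob_GN: "prob_space GN"
  unfolding GN_def by (rule prob_space_normal_density) simp

lemma space_GN[simp]: "space GN = UNIV" and sets_GN[simp]: "sets GN = sets borel"
  by (simp_all add: GN_def)

lemma GN_measI: "f \<in> borel_measurable borel \<Longrightarrow> f \<in> borel_measurable GN"
  by (metis measurable_cong_sets sets_GN)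

lemma GN_meas_lin[simp]: "(\<lambda>x. ennreal (exp (a * x))) \<in> borel_measurable GN"
  by (rule GN_measI) measurable

lemma GN_meas_sq[simp]: "(\<lambda>x. ennreal (exp (a * x\<^sup>2))) \<in> borel_measurable GN"
  by (rule GN_measI) measurable

lemma nn_normal_density: "\<sigma> > 0 \<Longrightarrow> (\<integral>\<^sup>+x. ennreal (normal_density \<mu> \<sigma> x) \<partial>lborel) = 1"
  by (subst nn_integral_eq_integral) (auto intro!: integral_normal_moment_even[of \<sigma> 0, simplified])

lemma GN_exp_lin: "(\<integral>\<^sup>+x. ennreal (exp (a * x)) \<partial>GN) = ennreal (exp (a\<^sup>2 / 2))"
proof -
  have eq: "std_normal_density x * exp (a * x) = exp (a\<^sup>2 / 2) * normal_density a 1 x" for x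
  proof -
    have e: "- x\<^sup>2 / 2 + a * x = a\<^sup>2 / 2 + (- (x - a)\<^sup>2 / 2)"
      by (simp add: power2_eq_square field_simps)
    have "exp (- x\<^sup>2 / 2) * exp (a * x) = exp (a\<^sup>2 / 2) * exp (- (x - a)\<^sup>2 / 2)"
      unfolding exp_add[symmetric] e ..
    then show ?thesis unfolding std_normal_density_def normal_density_def by simp
  qed
  have "(\<integral>\<^sup>+x. ennreal (exp (a * x)) \<partial>GN) = (\<integral>\<^sup>+x. ennreal (std_normal_density x) * ennreal (exp (a * x)) \<partial>lborel)"
    unfolding GN_def by (rule nn_integral_density) auto
  also have "\<dots> = (\<integral>\<^sup>+x. ennreal (exp (a\<^sup>2 / 2)) * ennreal (normal_density a 1 x) \<partial>lborel)"
    by (intro nn_integral_cong) (simp add: ennreal_mult'[symmetric] eq)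
  also have "\<dots> = ennreal (exp (a\<^sup>2 / 2)) * (\<integral>\<^sup>+x. ennreal (normal_density a 1 x) \<partial>lborel)"
    by (rule nn_integral_cmult) auto
  also have "\<dots> = ennreal (exp (a\<^sup>2 / 2))" using nn_normal_density[of 1 a] by simp
  finally show ?thesis .
qed

lemma GN_exp_sq:
  assumes "0 \<le> b" "b < 1/2"
  shows "(\<integral>\<^sup>+x. ennreal (exp (b * x\<^sup>2)) \<partial>GN) = ennreal (1 / sqrt (1 - 2 * b))"
proof -
  define \<sigma> where "\<sigma> = 1 / sqrt (1 - 2 * b)"
  have sp: "\<sigma> > 0" using assms unfolding \<sigma>_def by simp
  have s2: "\<sigma>\<^sup>2 = 1 / (1 - 2 * b)" using assms unfolding \<sigma>_def by (simp add: power_divide)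
  have eq: "std_normal_density x * exp (b * x\<^sup>2) = \<sigma> * normal_density 0 \<sigma> x" for x
  proof -
    have "sqrt (2 * pi * \<sigma>\<^sup>2) = sqrt (2 * pi) * \<sigma>" using sp by (simp add: real_sqrt_mult)
    moreover have "- x\<^sup>2 / (2 * \<sigma>\<^sup>2) = - x\<^sup>2 / 2 + b * x\<^sup>2" using assms unfolding s2 by (simp add: field_simps)
    ultimately show ?thesis unfolding std_normal_density_def normal_density_def using sp
      by (simp add: mult_exp_exp)
  qed
  have "(\<integral>\<^sup>+x. ennreal (exp (b * x\<^sup>2)) \<partial>GN) = (\<integral>\<^sup>+x. ennreal (std_normal_density x) * ennreal (exp (b * x\<^sup>2)) \<partial>lborel)"
    unfolding GN_def by (rule nn_integral_density) auto
  also have "\<dots> = (\<integral>\<^sup>+x. ennreal \<sigma> * ennreal (normal_density 0 \<sigma> x) \<partial>lborel)"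
  proof (intro nn_integral_cong)
    fix x
    have "ennreal (std_normal_density x) * ennreal (exp (b * x\<^sup>2)) = ennreal (\<sigma> * normal_density 0 \<sigma> x)"
      by (simp add: ennreal_mult'[symmetric] eq)
    also have "\<dots> = ennreal \<sigma> * ennreal (normal_density 0 \<sigma> x)"
      by (rule ennreal_mult) (use sp in auto)
    finally show "ennreal (std_normal_density x) * ennreal (exp (b * x\<^sup>2)) = ennreal \<sigma> * ennreal (normal_density 0 \<sigma> x)" .
  qed
  also have "\<dots> = ennreal \<sigma> * (\<integral>\<^sup>+x. ennreal (normal_density 0 \<sigma> x) \<partial>lborel)"
    by (rule nn_integral_cmult) auto
  also have "\<dots> = ennreal \<sigma>" using nn_normal_density[OF sp, of 0] by simp
  finally show ?thesis unfolding \<sigma>_def .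
qed


lemma vnorm2_orth_comb:
  assumes "finite E" "orthonormal n E"
  shows "vnorm2 n (\<lambda>i. \<Sum>e\<in>E. g e * e i) = (\<Sum>e\<in>E. (g e)\<^sup>2)"
proof -
  have "vnorm2 n (\<lambda>i. \<Sum>e\<in>E. g e * e i) = (\<Sum>e\<in>E. g e * (\<Sum>e'\<in>E. g e' * vinner n e e'))"
    unfolding vnorm2_def vinner_sum_left vinner_scale_left vinner_sum_right vinner_scale_right ..
  also have "\<dots> = (\<Sum>e\<in>E. g e * g e)"
  proof (intro sum.cong refl)
    fix e assume e: "e \<in> E"
    have "(\<Sum>e'\<in>E. g e' * vinner n e e') = (\<Sum>e'\<in>E. if e' = e then g e' else 0)"
      using assms(2) e unfolding orthonormal_def by (intro sum.cong) auto
    also have "\<dots> = g e" using assms(1) e by simp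
    finally show "g e * (\<Sum>e'\<in>E. g e' * vinner n e e') = g e * g e" by simp
  qed
  finally show ?thesis by (simp add: power2_eq_square)
qed

lemma vinner_meas[measurable]:
  assumes "random_vec M n \<xi>"
  shows "(\<lambda>\<omega>. vinner n v (\<xi> \<omega>)) \<in> borel_measurable M"
  using assms unfolding vinner_def random_vec_def by (intro borel_measurable_sum) auto

lemma subg_mgf:
  assumes "subgaussian M n \<xi> K"
  shows "(\<integral>\<^sup>+\<omega>. ennreal (exp (vinner n l (\<xi> \<omega>))) \<partial>M) \<le> ennreal (exp (K\<^sup>2 * vnorm2 n l / 2))"
proof -
  have int: "integrable M (\<lambda>\<omega>. exp (vinner n l (\<xi> \<omega>)))" and
    b: "(\<integral>\<omega>. exp (vinner n l (\<xi> \<omega>)) \<partial>M) \<le> exp (K\<^sup>2 * vnorm2 n l / 2)"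
    using assms unfolding subgaussian_def by auto
  have "(\<integral>\<^sup>+\<omega>. ennreal (exp (vinner n l (\<xi> \<omega>))) \<partial>M) = ennreal (\<integral>\<omega>. exp (vinner n l (\<xi> \<omega>)) \<partial>M)"
    by (rule nn_integral_eq_integral[OF int]) auto
  also have "\<dots> \<le> ennreal (exp (K\<^sup>2 * vnorm2 n l / 2))" using b by (rule ennreal_leI)
  finally show ?thesis .
qed

lemma subg_quad:
  assumes M: "prob_space M" and sg: "subgaussian M n \<xi> K" and finE: "finite E" and orth: "orthonormal n E"
    and c: "0 \<le> c" "2 * c * K\<^sup>2 < 1"
  shows "(\<integral>\<^sup>+\<omega>. ennreal (exp (c * (\<Sum>e\<in>E. (vinner n e (\<xi> \<omega>))\<^sup>2))) \<partial>M)
           \<le> ennreal ((1 / sqrt (1 - 2 * c * K\<^sup>2)) ^ card E)"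
proof -
  have rv: "random_vec M n \<xi>" using sg unfolding subgaussian_def by auto
  define s where "s = sqrt (2 * c)"
  have s2: "s\<^sup>2 = 2 * c" unfolding s_def using c by simp
  define P where "P = PiM E (\<lambda>_. GN)"
  interpret PSF: product_sigma_finite "\<lambda>_. GN"
    unfolding product_sigma_finite_def using prob_space_imp_sigma_finite[OF prob_GN] by auto
  have probP: "prob_space P" unfolding P_def by (rule prob_space_PiM) (rule prob_GN)
  interpret PS: pair_sigma_finite M P
    unfolding pair_sigma_finite_def using prob_space_imp_sigma_finite[OF M] prob_space_imp_sigma_finite[OF probP] by auto
  define t where "t = (\<lambda>\<omega> e. vinner n e (\<xi> \<omega>))"
  have tm[measurable]: "(\<lambda>\<omega>. t \<omega> e) \<in> borel_measurable M" for e
    unfolding t_def using vinner_meas[OF rv] .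
  define F where "F = (\<lambda>\<omega> (g::(nat\<Rightarrow>real)\<Rightarrow>real). ennreal (exp (s * (\<Sum>e\<in>E. g e * t \<omega> e))))"
  have m1[measurable]: "(\<lambda>x. snd x e) \<in> borel_measurable (M \<Otimes>\<^sub>M P)" if "e \<in> E" for e
  proof -
    have "(\<lambda>g. g e) \<in> measurable P GN" unfolding P_def using that by (rule measurable_component_singleton)
    then have "(\<lambda>g. g e) \<in> borel_measurable P" by (simp add: measurable_def)
    then show ?thesis by (rule measurable_compose[OF measurable_snd])
  qed
  have m2[measurable]: "(\<lambda>x. t (fst x) e) \<in> borel_measurable (M \<Otimes>\<^sub>M P)" for e
    by (rule measurable_compose[OF measurable_fst tm])
  have Fm: "case_prod F \<in> borel_measurable (M \<Otimes>\<^sub>M P)"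
  proof -
    have "(\<lambda>x. ennreal (exp (s * (\<Sum>e\<in>E. snd x e * t (fst x) e)))) \<in> borel_measurable (M \<Otimes>\<^sub>M P)"
      by measurable
    moreover have "case_prod F = (\<lambda>x. ennreal (exp (s * (\<Sum>e\<in>E. snd x e * t (fst x) e))))"
      unfolding F_def by auto
    ultimately show ?thesis by simp
  qed
  have step_a: "ennreal (exp (c * (\<Sum>e\<in>E. (t \<omega> e)\<^sup>2))) = (\<integral>\<^sup>+g. F \<omega> g \<partial>P)" for \<omega>
  proof -
    have "ennreal (exp (c * (\<Sum>e\<in>E. (t \<omega> e)\<^sup>2))) = ennreal (\<Prod>e\<in>E. exp (c * (t \<omega> e)\<^sup>2))"
      by (simp add: exp_sum finE sum_distrib_left)
    also have "\<dots> = (\<Prod>e\<in>E. ennreal (exp (c * (t \<omega> e)\<^sup>2)))"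
      by (rule prod_ennreal[symmetric]) auto
    also have "\<dots> = (\<Prod>e\<in>E. (\<integral>\<^sup>+x. ennreal (exp ((s * t \<omega> e) * x)) \<partial>GN))"
    proof (intro prod.cong refl)
      fix e
      have "(s * t \<omega> e)\<^sup>2 / 2 = c * (t \<omega> e)\<^sup>2" using s2 by (simp add: power_mult_distrib)
      then show "ennreal (exp (c * (t \<omega> e)\<^sup>2)) = (\<integral>\<^sup>+x. ennreal (exp ((s * t \<omega> e) * x)) \<partial>GN)"
        using GN_exp_lin[of "s * t \<omega> e"] by simp
    qed
    also have "\<dots> = (\<integral>\<^sup>+g. (\<Prod>e\<in>E. ennreal (exp ((s * t \<omega> e) * g e))) \<partial>P)"
      unfolding P_def by (rule PSF.product_nn_integral_prod[symmetric]) (use finE in auto)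
    also have "\<dots> = (\<integral>\<^sup>+g. F \<omega> g \<partial>P)"
    proof (intro nn_integral_cong)
      fix g :: "(nat\<Rightarrow>real)\<Rightarrow>real"
      have "(\<Prod>e\<in>E. ennreal (exp ((s * t \<omega> e) * g e))) = ennreal (\<Prod>e\<in>E. exp ((s * t \<omega> e) * g e))"
        by (rule prod_ennreal) auto
      also have "\<dots> = F \<omega> g" unfolding F_def
        by (simp add: exp_sum[symmetric] finE sum_distrib_left algebra_simps)
      finally show "(\<Prod>e\<in>E. ennreal (exp ((s * t \<omega> e) * g e))) = F \<omega> g" .
    qed
    finally show ?thesis .
  qed
  have step_c: "(\<integral>\<^sup>+\<omega>. F \<omega> g \<partial>M) \<le> ennreal (exp ((c * K\<^sup>2) * (\<Sum>e\<in>E. (g e)\<^sup>2)))" for g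
  proof -
    define l where "l = (\<lambda>i. s * (\<Sum>e\<in>E. g e * e i))"
    have "vinner n l (\<xi> \<omega>) = s * (\<Sum>e\<in>E. g e * t \<omega> e)" for \<omega>
      unfolding l_def t_def vinner_scale_left vinner_sum_left by simp
    then have "(\<integral>\<^sup>+\<omega>. F \<omega> g \<partial>M) = (\<integral>\<^sup>+\<omega>. ennreal (exp (vinner n l (\<xi> \<omega>))) \<partial>M)"
      unfolding F_def by simp
    also have "\<dots> \<le> ennreal (exp (K\<^sup>2 * vnorm2 n l / 2))" by (rule subg_mgf[OF sg])
    also have "vnorm2 n l = s\<^sup>2 * (\<Sum>e\<in>E. (g e)\<^sup>2)"
      unfolding l_def vnorm2_def vinner_scale_left vinner_scale_right
      using vnorm2_orth_comb[OF finE orth, of g] unfolding vnorm2_def by (simp add: power2_eq_square)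
    also have "K\<^sup>2 * (s\<^sup>2 * (\<Sum>e\<in>E. (g e)\<^sup>2)) / 2 = (c * K\<^sup>2) * (\<Sum>e\<in>E. (g e)\<^sup>2)"
      using s2 by simp
    finally show ?thesis .
  qed
  have step_d: "(\<integral>\<^sup>+g. ennreal (exp ((c * K\<^sup>2) * (\<Sum>e\<in>E. (g e)\<^sup>2))) \<partial>P)
      = ennreal ((1 / sqrt (1 - 2 * c * K\<^sup>2)) ^ card E)"
  proof -
    have "(\<integral>\<^sup>+g. ennreal (exp ((c * K\<^sup>2) * (\<Sum>e\<in>E. (g e)\<^sup>2))) \<partial>P)
        = (\<integral>\<^sup>+g. (\<Prod>e\<in>E. ennreal (exp ((c * K\<^sup>2) * (g e)\<^sup>2))) \<partial>P)"
    proof (intro nn_integral_cong)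
      fix g :: "(nat\<Rightarrow>real)\<Rightarrow>real"
      show "ennreal (exp ((c * K\<^sup>2) * (\<Sum>e\<in>E. (g e)\<^sup>2))) = (\<Prod>e\<in>E. ennreal (exp ((c * K\<^sup>2) * (g e)\<^sup>2)))"
        by (subst prod_ennreal) (auto simp: exp_sum[symmetric] finE sum_distrib_left)
    qed
    also have "\<dots> = (\<Prod>e\<in>E. (\<integral>\<^sup>+x. ennreal (exp ((c * K\<^sup>2) * x\<^sup>2)) \<partial>GN))"
      unfolding P_def by (rule PSF.product_nn_integral_prod) (use finE in auto)
    also have "\<dots> = (\<Prod>e\<in>E. ennreal (1 / sqrt (1 - 2 * (c * K\<^sup>2))))"
      using c by (intro prod.cong refl GN_exp_sq) (auto simp: mult.assoc)
    also have "\<dots> = ennreal ((1 / sqrt (1 - 2 * c * K\<^sup>2)) ^ card E)"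
      using c by (subst prod_ennreal) (auto simp: mult.assoc)
    finally show ?thesis .
  qed
  have "(\<integral>\<^sup>+\<omega>. ennreal (exp (c * (\<Sum>e\<in>E. (vinner n e (\<xi> \<omega>))\<^sup>2))) \<partial>M)
      = (\<integral>\<^sup>+\<omega>. (\<integral>\<^sup>+g. F \<omega> g \<partial>P) \<partial>M)"
    using step_a unfolding t_def by simp
  also have "\<dots> = (\<integral>\<^sup>+g. (\<integral>\<^sup>+\<omega>. F \<omega> g \<partial>M) \<partial>P)"
    by (rule PS.Fubini'[OF Fm, symmetric])
  also have "\<dots> \<le> (\<integral>\<^sup>+g. ennreal (exp ((c * K\<^sup>2) * (\<Sum>e\<in>E. (g e)\<^sup>2))) \<partial>P)"
    by (intro nn_integral_mono step_c)
  also have "\<dots> = ennreal ((1 / sqrt (1 - 2 * c * K\<^sup>2)) ^ card E)" by (rule step_d)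
  finally show ?thesis .
qed



lemma models_finite: "finite (models p u)"
  unfolding models_def by (rule finite_subset[of _ "Pow {0..<p}"]) auto

lemma models_elem_finite: "m \<in> models p u \<Longrightarrow> finite m"
  unfolding models_def using finite_subset by blast

lemma card_models: "card (models p u) \<le> p ^ u"
proof -
  have "card (models p u) = p choose u"
    unfolding models_def using n_subsets[of "{0..<p}" u] by simp
  also have "\<dots> \<le> p ^ u"
    by (cases "u \<le> p") (auto simp: binomial_le_pow binomial_eq_0)
  finally show ?thesis .
qed

lemma sq_ineq: "(\<eta>::real) > 0 \<Longrightarrow> (x - y)\<^sup>2 \<le> (1 + \<eta>) * x\<^sup>2 + (1 + 1/\<eta>) * y\<^sup>2"
proof -
  assume e: "\<eta> > 0"
  have "0 \<le> (\<eta> * x + y)\<^sup>2 / \<eta>" using e by simp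
  also have "(\<eta> * x + y)\<^sup>2 / \<eta> = \<eta> * x\<^sup>2 + 2 * x * y + y\<^sup>2 / \<eta>"
    using e by (simp add: power2_eq_square field_simps)
  finally show ?thesis by (simp add: power2_eq_square algebra_simps)
qed

lemma vnorm2_diff_le:
  "(\<eta>::real) > 0 \<Longrightarrow> vnorm2 n (\<lambda>i. x i - y i) \<le> (1 + \<eta>) * vnorm2 n x + (1 + 1/\<eta>) * vnorm2 n y"
  unfolding vnorm2_def vinner_def
  by (simp add: sum_distrib_left sum.distrib[symmetric] power2_eq_square[symmetric])
     (intro sum_mono sq_ineq)

lemma amgm_theta: "(\<theta>::real) > 0 \<Longrightarrow> x * y \<le> (\<theta> * x\<^sup>2 + y\<^sup>2 / \<theta>) / 2"
proof -
  assume t: "\<theta> > 0"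
  have "0 \<le> (\<theta> * x - y)\<^sup>2 / \<theta>" using t by simp
  also have "(\<theta> * x - y)\<^sup>2 / \<theta> = \<theta> * x\<^sup>2 - 2 * x * y + y\<^sup>2 / \<theta>"
    using t by (simp add: power2_eq_square field_simps)
  finally show ?thesis by simp
qed

lemma nn_sum_bound:
  assumes "finite T" "\<And>m. m \<in> T \<Longrightarrow> g m \<in> borel_measurable M"
    "\<And>m. m \<in> T \<Longrightarrow> 0 \<le> c m" "\<And>m \<omega>. m \<in> T \<Longrightarrow> 0 \<le> g m \<omega>"
    "\<And>m. m \<in> T \<Longrightarrow> (\<integral>\<^sup>+\<omega>. ennreal (g m \<omega>) \<partial>M) \<le> ennreal (r m)"
    "\<And>m. m \<in> T \<Longrightarrow> 0 \<le> r m"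
  shows "(\<integral>\<^sup>+\<omega>. ennreal (\<Sum>m\<in>T. c m * g m \<omega>) \<partial>M) \<le> ennreal (\<Sum>m\<in>T. c m * r m)"
proof -
  have "(\<integral>\<^sup>+\<omega>. ennreal (\<Sum>m\<in>T. c m * g m \<omega>) \<partial>M) = (\<integral>\<^sup>+\<omega>. (\<Sum>m\<in>T. ennreal (c m) * ennreal (g m \<omega>)) \<partial>M)"
    using assms(3,4) by (intro nn_integral_cong) (simp add: sum_ennreal[symmetric] ennreal_mult)
  also have "\<dots> = (\<Sum>m\<in>T. ennreal (c m) * (\<integral>\<^sup>+\<omega>. ennreal (g m \<omega>) \<partial>M))"
    using assms(2) by (simp add: nn_integral_sum nn_integral_cmult)
  also have "\<dots> \<le> (\<Sum>m\<in>T. ennreal (c m) * ennreal (r m))"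
    using assms(5) by (intro sum_mono mult_left_mono) auto
  also have "\<dots> = ennreal (\<Sum>m\<in>T. c m * r m)"
    using assms(3,6) by (subst sum_ennreal[symmetric]) (auto simp: ennreal_mult)
  finally show ?thesis .
qed


lemma nn_lin2:
  assumes "f \<in> borel_measurable M" "g \<in> borel_measurable M" "\<And>\<omega>. 0 \<le> f \<omega>" "\<And>\<omega>. 0 \<le> g \<omega>"
    "0 \<le> p" "0 \<le> q" "0 \<le> X" "0 \<le> Y"
    "(\<integral>\<^sup>+\<omega>. ennreal (f \<omega>) \<partial>M) \<le> ennreal X" "(\<integral>\<^sup>+\<omega>. ennreal (g \<omega>) \<partial>M) \<le> ennreal Y"
  shows "(\<integral>\<^sup>+\<omega>. ennreal (p * f \<omega> + q * g \<omega>) \<partial>M) \<le> ennreal (p * X + q * Y)"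
proof -
  have "(\<integral>\<^sup>+\<omega>. ennreal (p * f \<omega> + q * g \<omega>) \<partial>M) = (\<integral>\<^sup>+\<omega>. ennreal p * ennreal (f \<omega>) + ennreal q * ennreal (g \<omega>) \<partial>M)"
    using assms(3-6) by (intro nn_integral_cong) (simp add: ennreal_mult)
  also have "\<dots> = ennreal p * (\<integral>\<^sup>+\<omega>. ennreal (f \<omega>) \<partial>M) + ennreal q * (\<integral>\<^sup>+\<omega>. ennreal (g \<omega>) \<partial>M)"
    using assms(1,2) by (simp add: nn_integral_add nn_integral_cmult)
  also have "\<dots> \<le> ennreal p * ennreal X + ennreal q * ennreal Y"
    using assms(9,10) by (intro add_mono mult_left_mono) auto
  also have "\<dots> = ennreal (p * X + q * Y)"
    using assms(5-8) by (simp add: ennreal_mult)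
  finally show ?thesis .
qed

lemma xexp_bound:
  fixes a t c \<alpha> R :: real
  assumes "t \<le> a" "0 \<le> t" "c > 0" "\<alpha> > 0"
  shows "a * exp (- c * a / \<alpha> + R) \<le> (2 * \<alpha> / c) * exp (- c * t / (2 * \<alpha>) + R)"
proof -
  define y where "y = c * a / (2 * \<alpha>)"
  have y0: "y \<ge> 0" using assms unfolding y_def by simp
  have "y \<le> exp y" using exp_ge_add_one_self[of y] by linarith
  then have ye: "y * exp (- y) \<le> 1" by (simp add: exp_minus field_simps)
  have a: "a = (2 * \<alpha> / c) * y" unfolding y_def using assms by (simp add: field_simps)
  have "a * exp (- c * a / \<alpha> + R) = (2 * \<alpha> / c) * (y * exp (- y)) * exp (- y + R)"
  proof -
    have "- c * a / \<alpha> + R = - y + (- y + R)" unfolding y_def using assms by (simp add: field_simps)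
    then have e: "exp (- c * a / \<alpha> + R) = exp (- y) * exp (- y + R)" by (simp add: exp_add[symmetric])
    show ?thesis unfolding e by (subst a) (simp add: algebra_simps)
  qed
  also have "\<dots> \<le> (2 * \<alpha> / c) * 1 * exp (- c * t / (2 * \<alpha>) + R)"
  proof (intro mult_mono ye)
    have "c * t / (2 * \<alpha>) \<le> y" unfolding y_def using assms by (intro divide_right_mono mult_left_mono) auto
    then show "exp (- y + R) \<le> exp (- c * t / (2 * \<alpha>) + R)" by simp
  qed (use assms y0 in auto)
  finally show ?thesis by simp
qed

locale perN =
  fixes n p :: nat and Z :: "nat \<Rightarrow> nat \<Rightarrow> real" and u :: nat and \<alpha> K :: real
    and \<mu> :: "nat \<Rightarrow> real" and M :: "'a measure" and \<xi> :: "'a \<Rightarrow> nat \<Rightarrow> real"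
  assumes M: "prob_space M" and sg: "subgaussian M n \<xi> K" and alpha: "\<alpha> > 4 * K\<^sup>2"
begin

definition "Mods = models p u"
definition "resid m = vnorm2 n (projperp n Z m \<mu>)"
definition "hres m = projperp n Z m \<mu>"
definition "qf m x = (\<Sum>e\<in>ob n Z m. (vinner n e x)\<^sup>2)"
definition "Nres m \<omega> = vnorm2 n (projperp n Z m (\<lambda>i. \<mu> i + \<xi> \<omega> i))"
definition "wt m \<omega> = expweight n p Z u \<alpha> (\<lambda>i. \<mu> i + \<xi> \<omega> i) m"
definition "\<beta> = 4 * K\<^sup>2 / \<alpha>"
definition "\<eta> = (1 - \<beta>) / 2"
definition "c1 = 1 - \<beta> * (1 + \<eta>)"
definition "c2 = 1 + \<beta> * (1 + 1 / \<eta>)"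
definition "L = - ln (1 - \<beta>) / 4"
definition "Gb S m \<omega> = exp (- (resid m - resid S) / \<alpha> + (-2 / \<alpha>) * vinner n (\<lambda>i. hres m i - hres S i) (\<xi> \<omega>)
    + qf m (\<xi> \<omega>) / \<alpha>)"
definition "B1 S t \<omega> = t + (\<Sum>m\<in>{m\<in>Mods. resid m > t}. resid m * Gb S m \<omega>)"

lemma alpha_pos: "\<alpha> > 0"
  using alpha by (smt (verit) zero_le_power2)

lemma beta: "0 \<le> \<beta>" "\<beta> < 1"
  using alpha alpha_pos unfolding \<beta>_def by (auto simp: field_simps)

lemma eta_pos: "\<eta> > 0" using beta unfolding \<eta>_def by simp

lemma c1_pos: "c1 > 0"
proof -
  have "c1 * 2 = 2 - \<beta> * (3 - \<beta>)" unfolding c1_def \<eta>_def by (simp add: field_simps)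
  moreover have "\<beta> * (3 - \<beta>) < 2"
  proof -
    have "(\<beta> - 1) * (\<beta> - 2) > 0" using beta by (intro mult_neg_neg) auto
    then show ?thesis by (simp add: algebra_simps)
  qed
  ultimately show ?thesis by simp
qed

lemma L_nonneg: "L \<ge> 0"
  using beta unfolding L_def by (simp add: ln_le_zero_iff)

lemma rv: "random_vec M n \<xi>" using sg unfolding subgaussian_def by auto

lemma meas_vinner[measurable]: "(\<lambda>\<omega>. vinner n v (\<xi> \<omega>)) \<in> borel_measurable M"
  using vinner_meas[OF rv] .

lemma meas_qf[measurable]: "(\<lambda>\<omega>. qf m (\<xi> \<omega>)) \<in> borel_measurable M"
  unfolding qf_def by measurable

lemma meas_Gb[measurable]: "(\<lambda>\<omega>. Gb S m \<omega>) \<in> borel_measurable M"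
  unfolding Gb_def by measurable

lemma meas_B1[measurable]: "(\<lambda>\<omega>. B1 S t \<omega>) \<in> borel_measurable M"
  unfolding B1_def by measurable

lemma resid_nonneg: "resid m \<ge> 0" unfolding resid_def by (rule vnorm2_nonneg)

lemma qf_nonneg: "qf m x \<ge> 0" unfolding qf_def by (intro sum_nonneg) auto

lemma Nres_expand:
  assumes "finite m"
  shows "Nres m \<omega> = resid m + 2 * vinner n (hres m) (\<xi> \<omega>) + vnorm2 n (\<xi> \<omega>) - qf m (\<xi> \<omega>)"
proof -
  let ?E = "ob n Z m"
  have E: "obasis n Z m ?E" by (rule ob[OF assms])
  have "Nres m \<omega> = vnorm2 n (\<lambda>i. \<mu> i + \<xi> \<omega> i) - (\<Sum>e\<in>?E. (vinner n e (\<lambda>i. \<mu> i + \<xi> \<omega> i))\<^sup>2)"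
    unfolding Nres_def by (rule vnorm2_projperp[OF E])
  also have "vnorm2 n (\<lambda>i. \<mu> i + \<xi> \<omega> i) = vnorm2 n \<mu> + 2 * vinner n \<mu> (\<xi> \<omega>) + vnorm2 n (\<xi> \<omega>)"
    unfolding vnorm2_def vinner_add_left vinner_add_right using vinner_sym[of n "\<xi> \<omega>" \<mu>] by simp
  also have "(\<Sum>e\<in>?E. (vinner n e (\<lambda>i. \<mu> i + \<xi> \<omega> i))\<^sup>2)
     = (\<Sum>e\<in>?E. (vinner n e \<mu>)\<^sup>2) + 2 * (\<Sum>e\<in>?E. vinner n e \<mu> * vinner n e (\<xi> \<omega>)) + qf m (\<xi> \<omega>)"
    unfolding qf_def vinner_add_right
    by (simp add: power2_sum sum.distrib sum_distrib_left algebra_simps)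
  also have "resid m = vnorm2 n \<mu> - (\<Sum>e\<in>?E. (vinner n e \<mu>)\<^sup>2)"
    unfolding resid_def by (rule vnorm2_projperp[OF E])
  moreover have "vinner n (hres m) (\<xi> \<omega>) = vinner n \<mu> (\<xi> \<omega>) - (\<Sum>e\<in>?E. vinner n e \<mu> * vinner n e (\<xi> \<omega>))"
    unfolding hres_def by (rule vinner_projperp_left[OF E])
  ultimately show ?thesis by simp
qed

lemma Mods_finite: "finite Mods" unfolding Mods_def by (rule models_finite)

lemma wt_nonneg: "wt m \<omega> \<ge> 0"
  unfolding wt_def expweight_def by (intro divide_nonneg_nonneg sum_nonneg) auto

lemma denom_pos:
  assumes "S \<in> Mods"
  shows "(\<Sum>k\<in>Mods. exp (- Nres k \<omega> / \<alpha>)) \<ge> exp (- Nres S \<omega> / \<alpha>)"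
  by (rule member_le_sum) (use assms Mods_finite in auto)

lemma wt_sum:
  assumes "S \<in> Mods"
  shows "(\<Sum>m\<in>Mods. wt m \<omega>) = 1"
proof -
  have pos: "(\<Sum>k\<in>Mods. exp (- Nres k \<omega> / \<alpha>)) > 0"
    using denom_pos[OF assms, of \<omega>] by (smt (verit) exp_gt_zero)
  show ?thesis
    unfolding wt_def expweight_def sum_divide_distrib[symmetric]
    using pos unfolding Mods_def Nres_def by simp
qed

lemma wt_le:
  assumes "S \<in> Mods"
  shows "wt m \<omega> \<le> exp (- (Nres m \<omega> - Nres S \<omega>) / \<alpha>)"
proof -
  have pos: "(\<Sum>k\<in>Mods. exp (- Nres k \<omega> / \<alpha>)) > 0"
    using denom_pos[OF assms, of \<omega>] by (smt (verit) exp_gt_zero)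
  have "wt m \<omega> = exp (- Nres m \<omega> / \<alpha>) / (\<Sum>k\<in>Mods. exp (- Nres k \<omega> / \<alpha>))"
    unfolding wt_def expweight_def Mods_def Nres_def ..
  also have "\<dots> \<le> exp (- Nres m \<omega> / \<alpha>) / exp (- Nres S \<omega> / \<alpha>)"
    by (rule divide_left_mono[OF denom_pos[OF assms]]) (use pos in \<open>auto intro: less_imp_le mult_pos_pos\<close>)
  also have "\<dots> = exp (- (Nres m \<omega> - Nres S \<omega>) / \<alpha>)"
    by (simp add: exp_diff[symmetric] diff_divide_distrib)
  finally show ?thesis .
qed

lemma wt_le_Gb:
  assumes "S \<in> Mods" "m \<in> Mods"
  shows "wt m \<omega> \<le> Gb S m \<omega>"
proof -
  have fS: "finite S" and fm: "finite m" using assms models_elem_finite unfolding Mods_def by blast+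
  have "Nres m \<omega> - Nres S \<omega> \<ge> resid m - resid S + 2 * vinner n (\<lambda>i. hres m i - hres S i) (\<xi> \<omega>) - qf m (\<xi> \<omega>)"
    using Nres_expand[OF fS, of \<omega>] Nres_expand[OF fm, of \<omega>] qf_nonneg[of S "\<xi> \<omega>"]
    by (simp add: vinner_diff_left)
  then have "- (Nres m \<omega> - Nres S \<omega>) / \<alpha> \<le> - (resid m - resid S + 2 * vinner n (\<lambda>i. hres m i - hres S i) (\<xi> \<omega>) - qf m (\<xi> \<omega>)) / \<alpha>"
    using alpha_pos by (intro divide_right_mono) auto
  also have "\<dots> = - (resid m - resid S) / \<alpha> + (-2 / \<alpha>) * vinner n (\<lambda>i. hres m i - hres S i) (\<xi> \<omega>)
    + qf m (\<xi> \<omega>) / \<alpha>"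
    by (simp add: diff_divide_distrib add_divide_distrib)
  finally have "- (Nres m \<omega> - Nres S \<omega>) / \<alpha> \<le> - (resid m - resid S) / \<alpha> + (-2 / \<alpha>) * vinner n (\<lambda>i. hres m i - hres S i) (\<xi> \<omega>)
    + qf m (\<xi> \<omega>) / \<alpha>" .
  then have "exp (- (Nres m \<omega> - Nres S \<omega>) / \<alpha>) \<le> Gb S m \<omega>" unfolding Gb_def by simp
  then show ?thesis using wt_le[OF assms(1), of m \<omega>] by linarith
qed

lemma B1_ptwise:
  assumes "S \<in> Mods" "0 \<le> t"
  shows "(\<Sum>m\<in>Mods. wt m \<omega> * resid m) \<le> B1 S t \<omega>"
proof -
  have "wt m \<omega> * resid m \<le> t * wt m \<omega> + (if resid m > t then resid m * Gb S m \<omega> else 0)" if "m \<in> Mods" for m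
  proof (cases "resid m > t")
    case True
    have "wt m \<omega> * resid m \<le> Gb S m \<omega> * resid m"
      using wt_le_Gb[OF assms(1) that] resid_nonneg by (intro mult_right_mono) auto
    moreover have "t * wt m \<omega> \<ge> 0" using wt_nonneg[of m \<omega>] assms(2) by simp
    ultimately show ?thesis using True by (simp add: mult.commute)
  next
    case False
    then have "resid m * wt m \<omega> \<le> t * wt m \<omega>" using wt_nonneg[of m \<omega>] by (intro mult_right_mono) auto
    then show ?thesis using False by (simp add: mult.commute)
  qed
  then have "(\<Sum>m\<in>Mods. wt m \<omega> * resid m) \<le> (\<Sum>m\<in>Mods. t * wt m \<omega> + (if resid m > t then resid m * Gb S m \<omega> else 0))"
    by (rule sum_mono)
  also have "\<dots> = t + (\<Sum>m\<in>{m\<in>Mods. resid m > t}. resid m * Gb S m \<omega>)"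
    by (simp add: sum.distrib sum_distrib_left[symmetric] wt_sum[OF assms(1)] sum.inter_filter[OF Mods_finite])
  finally show ?thesis unfolding B1_def .
qed

lemma Gb_int:
  assumes "S \<in> Mods" "m \<in> Mods"
  shows "(\<integral>\<^sup>+\<omega>. ennreal (Gb S m \<omega>) \<partial>M) \<le> ennreal (exp (- c1 * resid m / \<alpha> + c2 * resid S / \<alpha> + u * L))"
proof -
  have fm: "finite m" using assms(2) models_elem_finite unfolding Mods_def by blast
  have cm: "card m = u" using assms(2) by (simp add: Mods_def models_def)
  let ?E = "ob n Z m"
  have E: "obasis n Z m ?E" by (rule ob[OF fm])
  have finE: "finite ?E" and cardE: "card ?E \<le> u" and orth: "orthonormal n ?E"
    using E cm unfolding obasis_def by auto
  define C where "C = - (resid m - resid S) / \<alpha>"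
  define v where "v = (\<lambda>i. hres m i - hres S i)"
  define V where "V = vnorm2 n v"
  define A where "A = (\<lambda>\<omega>. qf m (\<xi> \<omega>) / \<alpha>)"
  define B where "B = (\<lambda>\<omega>. (-2 / \<alpha>) * vinner n v (\<xi> \<omega>))"
  define lx where "lx = u * (2 * L)"
  define ly where "ly = 8 * K\<^sup>2 * V / \<alpha>\<^sup>2"
  define \<theta> where "\<theta> = exp ((ly - lx) / 2)"
  have ap: "\<alpha> > 0" by (rule alpha_pos)
  have b1: "1 - \<beta> > 0" "1 - \<beta> \<le> 1" using beta by auto
  have Xb: "(\<integral>\<^sup>+\<omega>. ennreal (exp (2 * A \<omega>)) \<partial>M) \<le> ennreal (exp lx)"
  proof -
    have "2 * (2 / \<alpha>) * K\<^sup>2 = \<beta>" unfolding \<beta>_def by simp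
    then have i1: "(\<integral>\<^sup>+\<omega>. ennreal (exp ((2 / \<alpha>) * (\<Sum>e\<in>?E. (vinner n e (\<xi> \<omega>))\<^sup>2))) \<partial>M)
        \<le> ennreal ((1 / sqrt (1 - \<beta>)) ^ card ?E)"
      using subg_quad[OF M sg finE orth, of "2 / \<alpha>"] ap beta by auto
    have "(1 / sqrt (1 - \<beta>)) ^ card ?E \<le> (1 / sqrt (1 - \<beta>)) ^ u"
      using b1 cardE by (intro power_increasing) (auto simp: real_sqrt_le_1_iff)
    also have "(1 / sqrt (1 - \<beta>)) ^ u = exp lx"
    proof -
      have "ln (1 / sqrt (1 - \<beta>)) = 2 * L"
        using b1 unfolding L_def by (simp add: ln_div ln_sqrt)
      then have "(1 / sqrt (1 - \<beta>)) ^ u = exp (u * (2 * L))"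
      proof -
        have x: "1 / sqrt (1 - \<beta>) > 0" using b1 by simp
        have "exp (real u * (2 * L)) = exp (2 * L) ^ u" by (rule exp_of_nat_mult)
        also have "exp (2 * L) = 1 / sqrt (1 - \<beta>)" using exp_ln[OF x] \<open>ln (1 / sqrt (1 - \<beta>)) = 2 * L\<close> by simp
        finally show ?thesis by simp
      qed
      then show ?thesis unfolding lx_def .
    qed
    finally have i2: "(1 / sqrt (1 - \<beta>)) ^ card ?E \<le> exp lx" .
    have "(\<lambda>\<omega>. ennreal (exp (2 * A \<omega>))) = (\<lambda>\<omega>. ennreal (exp ((2 / \<alpha>) * (\<Sum>e\<in>?E. (vinner n e (\<xi> \<omega>))\<^sup>2))))"
      unfolding A_def qf_def by simp
    then show ?thesis using order_trans[OF i1 ennreal_leI[OF i2]] by simp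
  qed
  have Yb: "(\<integral>\<^sup>+\<omega>. ennreal (exp (2 * B \<omega>)) \<partial>M) \<le> ennreal (exp ly)"
  proof -
    define l where "l = (\<lambda>i. (-4 / \<alpha>) * v i)"
    have "vinner n l (\<xi> \<omega>) = 2 * B \<omega>" for \<omega> unfolding l_def B_def vinner_scale_left by simp
    then have "(\<integral>\<^sup>+\<omega>. ennreal (exp (2 * B \<omega>)) \<partial>M) = (\<integral>\<^sup>+\<omega>. ennreal (exp (vinner n l (\<xi> \<omega>))) \<partial>M)"
      by simp
    also have "\<dots> \<le> ennreal (exp (K\<^sup>2 * vnorm2 n l / 2))" by (rule subg_mgf[OF sg])
    also have "K\<^sup>2 * vnorm2 n l / 2 = ly"
      unfolding l_def ly_def V_def vnorm2_def vinner_scale_left vinner_scale_right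
      by (simp add: power2_eq_square field_simps)
    finally show ?thesis .
  qed
  have tp: "\<theta> > 0" unfolding \<theta>_def by simp
  have pw: "Gb S m \<omega> \<le> (exp C * \<theta> / 2) * exp (2 * A \<omega>) + (exp C / (2 * \<theta>)) * exp (2 * B \<omega>)" for \<omega>
  proof -
    have "Gb S m \<omega> = exp C * (exp (A \<omega>) * exp (B \<omega>))"
      unfolding Gb_def C_def A_def B_def v_def by (simp add: exp_add[symmetric] algebra_simps)
    also have "\<dots> \<le> exp C * ((\<theta> * (exp (A \<omega>))\<^sup>2 + (exp (B \<omega>))\<^sup>2 / \<theta>) / 2)"
      by (intro mult_left_mono amgm_theta tp) auto
    also have "(exp (A \<omega>))\<^sup>2 = exp (2 * A \<omega>)" by (simp add: power2_eq_square exp_add[symmetric])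
    also have "(exp (B \<omega>))\<^sup>2 = exp (2 * B \<omega>)" by (simp add: power2_eq_square exp_add[symmetric])
    finally show ?thesis by (simp add: field_simps)
  qed
  have "(\<integral>\<^sup>+\<omega>. ennreal (Gb S m \<omega>) \<partial>M)
      \<le> (\<integral>\<^sup>+\<omega>. ennreal ((exp C * \<theta> / 2) * exp (2 * A \<omega>) + (exp C / (2 * \<theta>)) * exp (2 * B \<omega>)) \<partial>M)"
    by (intro nn_integral_mono ennreal_leI pw)
  also have "\<dots> \<le> ennreal ((exp C * \<theta> / 2) * exp lx + (exp C / (2 * \<theta>)) * exp ly)"
    by (rule nn_lin2[OF _ _ _ _ _ _ _ _ Xb Yb]) (use tp in \<open>auto simp: A_def B_def\<close>)
  also have "(exp C * \<theta> / 2) * exp lx + (exp C / (2 * \<theta>)) * exp ly = exp (C + (lx + ly) / 2)"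
  proof -
    have "\<theta> * exp lx = exp ((lx + ly) / 2)" unfolding \<theta>_def by (simp add: exp_add[symmetric] field_simps)
    moreover have "exp ly / \<theta> = exp ((lx + ly) / 2)" unfolding \<theta>_def by (simp add: exp_diff[symmetric] field_simps)
    moreover have "(exp C * \<theta> / 2) * exp lx + (exp C / (2 * \<theta>)) * exp ly
        = exp C / 2 * (\<theta> * exp lx) + exp C / 2 * (exp ly / \<theta>)" using tp by (simp add: field_simps)
    moreover have "exp (C + (lx + ly) / 2) = exp C * exp ((lx + ly) / 2)" by (simp add: exp_add)
    ultimately show ?thesis by simp
  qed
  also have "C + (lx + ly) / 2 \<le> - c1 * resid m / \<alpha> + c2 * resid S / \<alpha> + u * L"
  proof -
    have V: "V \<le> (1 + \<eta>) * resid m + (1 + 1 / \<eta>) * resid S"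
      unfolding V_def v_def using vnorm2_diff_le[OF eta_pos, of n "hres m" "hres S"]
      unfolding resid_def hres_def .
    have "ly / 2 = \<beta> / \<alpha> * V" unfolding ly_def \<beta>_def by (simp add: power2_eq_square field_simps)
    also have "\<dots> \<le> \<beta> / \<alpha> * ((1 + \<eta>) * resid m + (1 + 1 / \<eta>) * resid S)"
      using V beta ap by (intro mult_left_mono) auto
    finally have ly: "ly / 2 \<le> \<beta> / \<alpha> * ((1 + \<eta>) * resid m + (1 + 1 / \<eta>) * resid S)" .
    have eq: "C + \<beta> / \<alpha> * ((1 + \<eta>) * resid m + (1 + 1 / \<eta>) * resid S) = - c1 * resid m / \<alpha> + c2 * resid S / \<alpha>"
      unfolding C_def c1_def c2_def using ap by (simp add: field_simps)
    have lx2: "lx / 2 = u * L" unfolding lx_def by simp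
    show ?thesis using ly eq lx2 by (simp only: add_divide_distrib)
  qed
  then have "ennreal (exp (C + (lx + ly) / 2)) \<le> ennreal (exp (- c1 * resid m / \<alpha> + c2 * resid S / \<alpha> + u * L))"
    by (intro ennreal_leI) simp
  finally show ?thesis .
qed

lemma B1_int:
  assumes "S \<in> Mods" "0 \<le> t"
  shows "(\<integral>\<^sup>+\<omega>. ennreal (B1 S t \<omega>) \<partial>M)
    \<le> ennreal (t + card Mods * ((2 * \<alpha> / c1) * exp (- c1 * t / (2 * \<alpha>) + c2 * resid S / \<alpha> + u * L)))"
proof -
  define T where "T = {m\<in>Mods. resid m > t}"
  define R where "R = c2 * resid S / \<alpha> + u * L"
  define D where "D = (2 * \<alpha> / c1) * exp (- c1 * t / (2 * \<alpha>) + R)"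
  have finT: "finite T" unfolding T_def using Mods_finite by simp
  have TM: "T \<subseteq> Mods" unfolding T_def by auto
  interpret P: prob_space M by (rule M)
  have Gb0: "0 \<le> Gb S m \<omega>" for m \<omega> unfolding Gb_def by simp
  have "(\<integral>\<^sup>+\<omega>. ennreal (\<Sum>m\<in>T. resid m * Gb S m \<omega>) \<partial>M)
      \<le> ennreal (\<Sum>m\<in>T. resid m * exp (- c1 * resid m / \<alpha> + R))"
  proof (rule nn_sum_bound[OF finT])
    fix m assume m: "m \<in> T"
    have eq: "- c1 * resid m / \<alpha> + R = - c1 * resid m / \<alpha> + c2 * resid S / \<alpha> + u * L"
      unfolding R_def by simp
    show "(\<integral>\<^sup>+\<omega>. ennreal (Gb S m \<omega>) \<partial>M) \<le> ennreal (exp (- c1 * resid m / \<alpha> + R))"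
      unfolding eq using Gb_int[OF assms(1)] m TM by blast
  qed (auto simp: resid_nonneg Gb0)
  also have "(\<Sum>m\<in>T. resid m * exp (- c1 * resid m / \<alpha> + R)) \<le> (\<Sum>m\<in>T. D)"
    unfolding D_def using assms(2) c1_pos alpha_pos
    by (intro sum_mono xexp_bound) (auto simp: T_def)
  also have "(\<Sum>m\<in>T. D) \<le> card Mods * D"
  proof -
    have "card T \<le> card Mods" using TM Mods_finite by (rule card_mono[rotated])
    moreover have "D \<ge> 0" unfolding D_def using c1_pos alpha_pos by simp
    ultimately show ?thesis by (simp add: mult_right_mono)
  qed
  finally have bT: "(\<integral>\<^sup>+\<omega>. ennreal (\<Sum>m\<in>T. resid m * Gb S m \<omega>) \<partial>M) \<le> ennreal (card Mods * D)"
    by (auto intro: ennreal_leI)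
  have "(\<integral>\<^sup>+\<omega>. ennreal (B1 S t \<omega>) \<partial>M) = (\<integral>\<^sup>+\<omega>. ennreal t + ennreal (\<Sum>m\<in>T. resid m * Gb S m \<omega>) \<partial>M)"
    unfolding B1_def T_def using assms(2)
    by (intro nn_integral_cong ennreal_plus) (auto intro!: sum_nonneg mult_nonneg_nonneg resid_nonneg simp: Gb0)
  also have "\<dots> = ennreal t + (\<integral>\<^sup>+\<omega>. ennreal (\<Sum>m\<in>T. resid m * Gb S m \<omega>) \<partial>M)"
    by (subst nn_integral_add) (auto simp: P.emeasure_space_1)
  also have "\<dots> \<le> ennreal t + ennreal (card Mods * D)" using bT by (rule add_left_mono)
  also have "\<dots> = ennreal (t + card Mods * D)"
    using assms(2) c1_pos alpha_pos unfolding D_def by (subst ennreal_plus) auto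
  also have "D = (2 * \<alpha> / c1) * exp (- c1 * t / (2 * \<alpha>) + c2 * resid S / \<alpha> + u * L)"
    unfolding D_def R_def by (simp add: add.assoc)
  finally show ?thesis .
qed

end

lemma integral_abs_le_nn:
  fixes f :: "'a \<Rightarrow> real"
  assumes "(\<integral>\<^sup>+\<omega>. ennreal \<bar>f \<omega>\<bar> \<partial>M) \<le> ennreal R" "0 \<le> R"
  shows "\<bar>integral\<^sup>L M f\<bar> \<le> R"
proof (cases "integrable M f")
  case True
  have "ennreal \<bar>integral\<^sup>L M f\<bar> \<le> (\<integral>\<^sup>+\<omega>. ennreal \<bar>f \<omega>\<bar> \<partial>M)"
    using integral_norm_bound_ennreal[OF True] by simp
  also have "\<dots> \<le> ennreal R" by fact
  finally show ?thesis using assms(2) by simp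
next
  case False
  then show ?thesis using assms(2) by (simp add: not_integrable_integral_eq)
qed

locale perN2 = perN +
  fixes \<zeta> :: "'a \<Rightarrow> nat \<Rightarrow> real" and Kz :: real
  assumes sgz: "subgaussian M n \<zeta> Kz"
begin

definition "eh k = (\<lambda>i. (1 / sqrt (resid k)) * hres k i)"
definition "lam = 1 / (4 * Kz\<^sup>2 + 1)"
definition "Yv k \<omega> = vinner n (eh k) (\<zeta> \<omega>)"

lemma lam_pos: "lam > 0" unfolding lam_def by (smt (verit) zero_le_power2 divide_pos_pos)

lemma rvz: "random_vec M n \<zeta>" using sgz unfolding subgaussian_def by auto

lemma meas_Yv[measurable]: "(\<lambda>\<omega>. Yv k \<omega>) \<in> borel_measurable M"
  unfolding Yv_def using vinner_meas[OF rvz] .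

lemma X_eq:
  assumes "m \<in> Mods"
  shows "vinner n \<mu> (projperp n Z m (\<zeta> \<omega>)) = vinner n (hres m) (\<zeta> \<omega>)"
proof -
  have fm: "finite m" using assms models_elem_finite unfolding Mods_def by blast
  have E: "obasis n Z m (ob n Z m)" by (rule ob[OF fm])
  show ?thesis unfolding hres_def vinner_projperp_left[OF E] vinner_projperp_right[OF E] ..
qed

lemma X_bound:
  "\<bar>vinner n (hres m) (\<zeta> \<omega>)\<bar> \<le> sqrt (resid m) * \<bar>Yv m \<omega>\<bar>"
proof (cases "resid m = 0")
  case True
  have "hres m i = 0" if "i < n" for i using vnorm2_zero[OF True[unfolded resid_def] that] unfolding hres_def .
  then have "vinner n (hres m) (\<zeta> \<omega>) = 0" by (intro vinner_zero_left) auto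
  then show ?thesis using resid_nonneg[of m] by simp
next
  case False
  then have r: "resid m > 0" using resid_nonneg[of m] by simp
  have "Yv m \<omega> = (1 / sqrt (resid m)) * vinner n (hres m) (\<zeta> \<omega>)"
    unfolding Yv_def eh_def vinner_scale_left ..
  then have "vinner n (hres m) (\<zeta> \<omega>) = sqrt (resid m) * Yv m \<omega>" using r by (simp add: field_simps)
  then show ?thesis using r by (simp add: abs_mult)
qed

lemma amgm_delta: "(\<delta>::real) > 0 \<Longrightarrow> 0 \<le> r \<Longrightarrow> sqrt r * \<bar>y\<bar> \<le> \<delta> / 2 * r + y\<^sup>2 / (2 * \<delta>)"
proof -
  assume d: "\<delta> > 0" and r: "0 \<le> r"
  have "0 \<le> (\<delta> * sqrt r - \<bar>y\<bar>)\<^sup>2 / (2 * \<delta>)" using d by simp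
  also have "(\<delta> * sqrt r - \<bar>y\<bar>)\<^sup>2 / (2 * \<delta>) = \<delta> / 2 * r - sqrt r * \<bar>y\<bar> + y\<^sup>2 / (2 * \<delta>)"
    using d r by (simp add: power2_eq_square field_simps)
  finally show ?thesis by simp
qed

lemma sq_le_soft:
  assumes "lam > 0" "k \<in> Mods"
  shows "(Yv k \<omega>)\<^sup>2 \<le> t2 + (1 / lam) * exp (- lam * t2) * (\<Sum>j\<in>Mods. exp (lam * (Yv j \<omega>)\<^sup>2))"
proof -
  have "lam * ((Yv k \<omega>)\<^sup>2 - t2) \<le> exp (lam * ((Yv k \<omega>)\<^sup>2 - t2))"
    using exp_ge_add_one_self[of "lam * ((Yv k \<omega>)\<^sup>2 - t2)"] by linarith
  also have "\<dots> = exp (- lam * t2) * exp (lam * (Yv k \<omega>)\<^sup>2)"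
    by (simp add: exp_add[symmetric] algebra_simps)
  also have "\<dots> \<le> exp (- lam * t2) * (\<Sum>j\<in>Mods. exp (lam * (Yv j \<omega>)\<^sup>2))"
    by (intro mult_left_mono member_le_sum) (use assms Mods_finite in auto)
  finally have "lam * ((Yv k \<omega>)\<^sup>2 - t2) \<le> exp (- lam * t2) * (\<Sum>j\<in>Mods. exp (lam * (Yv j \<omega>)\<^sup>2))" .
  then show ?thesis using assms(1) by (simp add: field_simps)
qed

definition "R0 t2 \<omega> = t2 + (1 / lam) * exp (- lam * t2) * (\<Sum>j\<in>Mods. exp (lam * (Yv j \<omega>)\<^sup>2))"

lemma part2_ptwise:
  assumes "S \<in> Mods" "0 \<le> t" "\<delta> > 0"
  shows "\<bar>\<Sum>m\<in>Mods. wt m \<omega> * vinner n \<mu> (projperp n Z m (\<zeta> \<omega>))\<bar> \<le> \<delta> / 2 * B1 S t \<omega> + (1 / (2 * \<delta>)) * R0 t2 \<omega>"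
proof -
  have "\<bar>\<Sum>m\<in>Mods. wt m \<omega> * vinner n \<mu> (projperp n Z m (\<zeta> \<omega>))\<bar>
     \<le> (\<Sum>m\<in>Mods. \<bar>wt m \<omega> * vinner n \<mu> (projperp n Z m (\<zeta> \<omega>))\<bar>)" by (rule sum_abs)
  also have "\<dots> \<le> (\<Sum>m\<in>Mods. wt m \<omega> * (\<delta> / 2 * resid m) + wt m \<omega> * ((1 / (2 * \<delta>)) * R0 t2 \<omega>))"
  proof (intro sum_mono)
    fix m assume m: "m \<in> Mods"
    have "\<bar>vinner n \<mu> (projperp n Z m (\<zeta> \<omega>))\<bar> \<le> sqrt (resid m) * \<bar>Yv m \<omega>\<bar>"
      using X_eq[OF m] X_bound by simp
    also have "\<dots> \<le> \<delta> / 2 * resid m + (Yv m \<omega>)\<^sup>2 / (2 * \<delta>)"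
      by (rule amgm_delta[OF assms(3) resid_nonneg])
    also have "(Yv m \<omega>)\<^sup>2 / (2 * \<delta>) \<le> R0 t2 \<omega> / (2 * \<delta>)"
      using sq_le_soft[OF lam_pos m] assms(3) unfolding R0_def by (intro divide_right_mono) auto
    finally have "\<bar>vinner n \<mu> (projperp n Z m (\<zeta> \<omega>))\<bar> \<le> \<delta> / 2 * resid m + (1 / (2 * \<delta>)) * R0 t2 \<omega>" by simp
    then have "wt m \<omega> * \<bar>vinner n \<mu> (projperp n Z m (\<zeta> \<omega>))\<bar> \<le> wt m \<omega> * (\<delta> / 2 * resid m + (1 / (2 * \<delta>)) * R0 t2 \<omega>)"
      using wt_nonneg by (rule mult_left_mono)
    then show "\<bar>wt m \<omega> * vinner n \<mu> (projperp n Z m (\<zeta> \<omega>))\<bar> \<le> wt m \<omega> * (\<delta> / 2 * resid m) + wt m \<omega> * ((1 / (2 * \<delta>)) * R0 t2 \<omega>)"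
      using wt_nonneg[of m \<omega>] by (simp add: abs_mult distrib_left)
  qed
  also have "\<dots> = \<delta> / 2 * (\<Sum>m\<in>Mods. wt m \<omega> * resid m) + (1 / (2 * \<delta>)) * R0 t2 \<omega>"
  proof -
    have "(\<Sum>m\<in>Mods. wt m \<omega> * ((1 / (2 * \<delta>)) * R0 t2 \<omega>)) = (\<Sum>m\<in>Mods. wt m \<omega>) * ((1 / (2 * \<delta>)) * R0 t2 \<omega>)"
      by (rule sum_distrib_right[symmetric])
    moreover have "(\<Sum>m\<in>Mods. wt m \<omega> * (\<delta> / 2 * resid m)) = \<delta> / 2 * (\<Sum>m\<in>Mods. wt m \<omega> * resid m)"
      by (simp add: sum_distrib_left algebra_simps)
    ultimately show ?thesis by (simp add: sum.distrib wt_sum[OF assms(1)])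
  qed
  also have "\<dots> \<le> \<delta> / 2 * B1 S t \<omega> + (1 / (2 * \<delta>)) * R0 t2 \<omega>"
    using B1_ptwise[OF assms(1,2)] assms(3) by simp
  finally show ?thesis .
qed

lemma Yv_int:
  "(\<integral>\<^sup>+\<omega>. ennreal (exp (lam * (Yv k \<omega>)\<^sup>2)) \<partial>M) \<le> ennreal 2"
proof (cases "resid k = 0")
  case True
  interpret P: prob_space M by (rule M)
  have "eh k = (\<lambda>i. 0)" unfolding eh_def True by simp
  then have "Yv k \<omega> = 0" for \<omega> unfolding Yv_def vinner_def by simp
  then show ?thesis by (simp add: P.emeasure_space_1)
next
  case False
  then have r: "resid k > 0" using resid_nonneg[of k] by simp
  have o: "orthonormal n {eh k}"
  proof -
    have "vinner n (eh k) (eh k) = (1 / sqrt (resid k)) * (1 / sqrt (resid k)) * resid k"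
      unfolding eh_def vinner_scale_left vinner_scale_right resid_def vnorm2_def hres_def by simp
    also have "\<dots> = 1" using r by (simp add: field_simps)
    finally show ?thesis unfolding orthonormal_def by simp
  qed
  have p: "4 * Kz\<^sup>2 + 1 > 0" using zero_le_power2[of Kz] by linarith
  have eq: "lam * (4 * Kz\<^sup>2 + 1) = 1" unfolding lam_def using p by simp
  have "(2 * (2 * lam * Kz\<^sup>2)) * (4 * Kz\<^sup>2 + 1) = 4 * Kz\<^sup>2 * (lam * (4 * Kz\<^sup>2 + 1))"
    by (simp add: algebra_simps)
  also have "\<dots> \<le> 1 * (4 * Kz\<^sup>2 + 1)" unfolding eq by simp
  finally have "(2 * (2 * lam * Kz\<^sup>2)) * (4 * Kz\<^sup>2 + 1) \<le> 1 * (4 * Kz\<^sup>2 + 1)" .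
  then have "2 * (2 * lam * Kz\<^sup>2) \<le> 1" using p by (rule mult_right_le_imp_le)
  then have lk: "2 * lam * Kz\<^sup>2 \<le> 1 / 2" by simp
  then have lk1: "2 * lam * Kz\<^sup>2 < 1" by simp
  have "(\<integral>\<^sup>+\<omega>. ennreal (exp (lam * (Yv k \<omega>)\<^sup>2)) \<partial>M) \<le> ennreal ((1 / sqrt (1 - 2 * lam * Kz\<^sup>2)) ^ card {eh k})"
    using subg_quad[OF M sgz _ o, of lam] lam_pos lk1 unfolding Yv_def by auto
  also have "(1 / sqrt (1 - 2 * lam * Kz\<^sup>2)) ^ card {eh k} \<le> 2"
  proof -
    have "1 - 2 * lam * Kz\<^sup>2 \<ge> 1 / 4" using lk by simp
    then have "sqrt (1 - 2 * lam * Kz\<^sup>2) \<ge> sqrt (1 / 4)" by (rule real_sqrt_le_mono)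
    moreover have "sqrt (1 / 4 :: real) = 1 / 2" by (simp add: real_sqrt_divide)
    ultimately have "sqrt (1 - 2 * lam * Kz\<^sup>2) \<ge> 1 / 2" by simp
    then have "1 / sqrt (1 - 2 * lam * Kz\<^sup>2) \<le> 1 / (1 / 2)" using lk1 by (intro divide_left_mono) auto
    then show ?thesis by simp
  qed
  finally show ?thesis by (auto intro: ennreal_leI)
qed

lemma R0_int:
  assumes "t2 = ln (card Mods + 1) / lam"
  shows "(\<integral>\<^sup>+\<omega>. ennreal (R0 t2 \<omega>) \<partial>M) \<le> ennreal (t2 + 2 / lam)"
proof -
  interpret P: prob_space M by (rule M)
  define c where "c = (1 / lam) * exp (- lam * t2)"
  have c0: "c \<ge> 0" unfolding c_def using lam_pos by simp
  have t20: "t2 \<ge> 0" unfolding assms using lam_pos by simp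
  have ec: "exp (- lam * t2) = 1 / (card Mods + 1)"
    unfolding assms using lam_pos by (simp add: exp_minus inverse_eq_divide)
  have "(\<integral>\<^sup>+\<omega>. ennreal (\<Sum>j\<in>Mods. c * exp (lam * (Yv j \<omega>)\<^sup>2)) \<partial>M) \<le> ennreal (\<Sum>j\<in>Mods. c * 2)"
    by (rule nn_sum_bound[OF Mods_finite]) (auto simp: c0 Yv_int[simplified])
  also have "(\<Sum>j\<in>Mods. c * 2) \<le> 2 / lam"
  proof -
    have "(\<Sum>j\<in>Mods. c * 2) = 2 / lam * (card Mods / (card Mods + 1))"
      unfolding c_def ec by simp
    also have "\<dots> \<le> 2 / lam * 1" using lam_pos by (intro mult_left_mono) auto
    finally show ?thesis by simp
  qed
  finally have b: "(\<integral>\<^sup>+\<omega>. ennreal (\<Sum>j\<in>Mods. c * exp (lam * (Yv j \<omega>)\<^sup>2)) \<partial>M) \<le> ennreal (2 / lam)"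
    by (auto intro: ennreal_leI)
  have "(\<integral>\<^sup>+\<omega>. ennreal (R0 t2 \<omega>) \<partial>M) = (\<integral>\<^sup>+\<omega>. ennreal t2 + ennreal (\<Sum>j\<in>Mods. c * exp (lam * (Yv j \<omega>)\<^sup>2)) \<partial>M)"
  proof (intro nn_integral_cong)
    fix \<omega>
    have "R0 t2 \<omega> = t2 + (\<Sum>j\<in>Mods. c * exp (lam * (Yv j \<omega>)\<^sup>2))"
      unfolding R0_def c_def by (simp add: sum_distrib_left mult.assoc)
    moreover have "(\<Sum>j\<in>Mods. c * exp (lam * (Yv j \<omega>)\<^sup>2)) \<ge> 0" using c0 by (intro sum_nonneg) auto
    ultimately show "ennreal (R0 t2 \<omega>) = ennreal t2 + ennreal (\<Sum>j\<in>Mods. c * exp (lam * (Yv j \<omega>)\<^sup>2))"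
      using t20 by (simp add: ennreal_plus)
  qed
  also have "\<dots> = ennreal t2 + (\<integral>\<^sup>+\<omega>. ennreal (\<Sum>j\<in>Mods. c * exp (lam * (Yv j \<omega>)\<^sup>2)) \<partial>M)"
    by (subst nn_integral_add) (auto simp: P.emeasure_space_1)
  also have "\<dots> \<le> ennreal t2 + ennreal (2 / lam)" using b by (rule add_left_mono)
  also have "\<dots> = ennreal (t2 + 2 / lam)" using t20 lam_pos by (subst ennreal_plus) auto
  finally show ?thesis .
qed

lemma meas_R0[measurable]: "(\<lambda>\<omega>. R0 t2 \<omega>) \<in> borel_measurable M"
  unfolding R0_def by measurable

lemma R0_nonneg: "t2 \<ge> 0 \<Longrightarrow> R0 t2 \<omega> \<ge> 0"
  unfolding R0_def using lam_pos by (intro add_nonneg_nonneg mult_nonneg_nonneg sum_nonneg) auto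

lemma B1_nonneg: "t \<ge> 0 \<Longrightarrow> B1 S t \<omega> \<ge> 0"
  unfolding B1_def Gb_def by (intro add_nonneg_nonneg sum_nonneg mult_nonneg_nonneg resid_nonneg) auto

lemma part2_int:
  assumes "S \<in> Mods" "0 \<le> t" "\<delta> > 0"
  shows "\<bar>\<integral>\<omega>. (\<Sum>m\<in>Mods. wt m \<omega> * vinner n \<mu> (projperp n Z m (\<zeta> \<omega>))) \<partial>M\<bar>
    \<le> \<delta> / 2 * (t + card Mods * ((2 * \<alpha> / c1) * exp (- c1 * t / (2 * \<alpha>) + c2 * resid S / \<alpha> + u * L)))
      + (1 / (2 * \<delta>)) * (ln (card Mods + 1) / lam + 2 / lam)"
proof (rule integral_abs_le_nn)
  define t2 where "t2 = ln (card Mods + 1) / lam"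
  have t20: "t2 \<ge> 0" unfolding t2_def using lam_pos by simp
  have "(\<integral>\<^sup>+\<omega>. ennreal \<bar>\<Sum>m\<in>Mods. wt m \<omega> * vinner n \<mu> (projperp n Z m (\<zeta> \<omega>))\<bar> \<partial>M)
     \<le> (\<integral>\<^sup>+\<omega>. ennreal (\<delta> / 2 * B1 S t \<omega> + (1 / (2 * \<delta>)) * R0 t2 \<omega>) \<partial>M)"
    by (intro nn_integral_mono ennreal_leI part2_ptwise assms)
  also have "\<dots> \<le> ennreal (\<delta> / 2 * (t + card Mods * ((2 * \<alpha> / c1) * exp (- c1 * t / (2 * \<alpha>) + c2 * resid S / \<alpha> + u * L)))
      + (1 / (2 * \<delta>)) * (t2 + 2 / lam))"
    by (rule nn_lin2[OF _ _ _ _ _ _ _ _ B1_int[OF assms(1,2)] R0_int[OF t2_def]])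
       (use assms t20 lam_pos c1_pos alpha_pos in \<open>auto intro!: B1_nonneg R0_nonneg\<close>)
  finally show "(\<integral>\<^sup>+\<omega>. ennreal \<bar>\<Sum>m\<in>Mods. wt m \<omega> * vinner n \<mu> (projperp n Z m (\<zeta> \<omega>))\<bar> \<partial>M)
     \<le> ennreal (\<delta> / 2 * (t + card Mods * ((2 * \<alpha> / c1) * exp (- c1 * t / (2 * \<alpha>) + c2 * resid S / \<alpha> + u * L)))
      + (1 / (2 * \<delta>)) * (ln (card Mods + 1) / lam + 2 / lam))" unfolding t2_def .
qed (use assms lam_pos c1_pos alpha_pos in \<open>auto intro!: add_nonneg_nonneg mult_nonneg_nonneg\<close>)

end

lemma (in perN) part1_int:
  assumes "S \<in> Mods" "0 \<le> t"
  shows "\<bar>\<integral>\<omega>. (\<Sum>m\<in>Mods. wt m \<omega> * resid m) \<partial>M\<bar>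
    \<le> t + card Mods * ((2 * \<alpha> / c1) * exp (- c1 * t / (2 * \<alpha>) + c2 * resid S / \<alpha> + u * L))"
proof (rule integral_abs_le_nn)
  have "(\<integral>\<^sup>+\<omega>. ennreal \<bar>\<Sum>m\<in>Mods. wt m \<omega> * resid m\<bar> \<partial>M) \<le> (\<integral>\<^sup>+\<omega>. ennreal (B1 S t \<omega>) \<partial>M)"
  proof (intro nn_integral_mono ennreal_leI)
    fix \<omega>
    have "0 \<le> (\<Sum>m\<in>Mods. wt m \<omega> * resid m)" by (intro sum_nonneg mult_nonneg_nonneg wt_nonneg resid_nonneg)
    then show "\<bar>\<Sum>m\<in>Mods. wt m \<omega> * resid m\<bar> \<le> B1 S t \<omega>" using B1_ptwise[OF assms] by simp
  qed
  also have "\<dots> \<le> ennreal (t + card Mods * ((2 * \<alpha> / c1) * exp (- c1 * t / (2 * \<alpha>) + c2 * resid S / \<alpha> + u * L)))"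
    by (rule B1_int[OF assms])
  finally show "(\<integral>\<^sup>+\<omega>. ennreal \<bar>\<Sum>m\<in>Mods. wt m \<omega> * resid m\<bar> \<partial>M)
    \<le> ennreal (t + card Mods * ((2 * \<alpha> / c1) * exp (- c1 * t / (2 * \<alpha>) + c2 * resid S / \<alpha> + u * L)))" .
qed (use assms c1_pos alpha_pos in \<open>auto intro!: add_nonneg_nonneg mult_nonneg_nonneg\<close>)

definition "gb K \<alpha> = 4 * K\<^sup>2 / (\<alpha>::real)"
definition "geta K \<alpha> = (1 - gb K \<alpha>) / 2"
definition "gc1 K \<alpha> = 1 - gb K \<alpha> * (1 + geta K \<alpha>)"
definition "gc2 K \<alpha> = 1 + gb K \<alpha> * (1 + 1 / geta K \<alpha>)"
definition "gL K \<alpha> = - ln (1 - gb K \<alpha>) / 4"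

lemma (in perN) consts_eq: "c1 = gc1 K \<alpha>" "c2 = gc2 K \<alpha>" "L = gL K \<alpha>"
  unfolding c1_def c2_def L_def \<eta>_def \<beta>_def gc1_def gc2_def gL_def geta_def gb_def by simp_all

lemma gconsts:
  assumes "\<alpha> > 4 * K\<^sup>2"
  shows "gc1 K \<alpha> > 0" "gc2 K \<alpha> > 0" "gL K \<alpha> \<ge> 0"
proof -
  have ap: "\<alpha> > 0" using assms by (smt (verit) zero_le_power2)
  have b: "0 \<le> gb K \<alpha>" "gb K \<alpha> < 1" using assms ap unfolding gb_def by (auto simp: field_simps)
  have e: "geta K \<alpha> > 0" using b unfolding geta_def by simp
  have "gc1 K \<alpha> * 2 = 2 - gb K \<alpha> * (3 - gb K \<alpha>)" unfolding gc1_def geta_def by (simp add: field_simps)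
  moreover have "gb K \<alpha> * (3 - gb K \<alpha>) < 2"
  proof -
    have "(gb K \<alpha> - 1) * (gb K \<alpha> - 2) > 0" using b by (intro mult_neg_neg) auto
    then show ?thesis by (simp add: algebra_simps)
  qed
  ultimately show "gc1 K \<alpha> > 0" by simp
  show "gc2 K \<alpha> > 0" unfolding gc2_def using b e by (smt (verit) divide_pos_pos mult_nonneg_nonneg)
  show "gL K \<alpha> \<ge> 0" using b unfolding gL_def by (simp add: ln_le_zero_iff)
qed

lemma part1_glob:
  assumes "prob_space M" "subgaussian M n \<xi> K" "\<alpha> > 4 * K\<^sup>2" "S \<in> models p u" "0 \<le> t"
  shows "\<bar>\<integral>\<omega>. (\<Sum>m\<in>models p u. expweight n p Z u \<alpha> (\<lambda>i. \<mu> i + \<xi> \<omega> i) m * vnorm2 n (projperp n Z m \<mu>)) \<partial>M\<bar>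
    \<le> t + card (models p u) * ((2 * \<alpha> / gc1 K \<alpha>) * exp (- gc1 K \<alpha> * t / (2 * \<alpha>)
         + gc2 K \<alpha> * vnorm2 n (projperp n Z S \<mu>) / \<alpha> + u * gL K \<alpha>))"
proof -
  interpret perN n p Z u \<alpha> K \<mu> M \<xi> by (intro perN.intro) (rule assms)+
  show ?thesis using part1_int[of S t] assms unfolding Mods_def wt_def resid_def consts_eq by simp
qed

lemma part2_glob:
  assumes "prob_space M" "subgaussian M n \<xi> K" "\<alpha> > 4 * K\<^sup>2" "S \<in> models p u" "0 \<le> t"
    "subgaussian M n \<zeta> Kz" "\<delta> > 0"
  shows "\<bar>\<integral>\<omega>. (\<Sum>m\<in>models p u. expweight n p Z u \<alpha> (\<lambda>i. \<mu> i + \<xi> \<omega> i) m * vinner n \<mu> (projperp n Z m (\<zeta> \<omega>))) \<partial>M\<bar>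
    \<le> \<delta> / 2 * (t + card (models p u) * ((2 * \<alpha> / gc1 K \<alpha>) * exp (- gc1 K \<alpha> * t / (2 * \<alpha>)
         + gc2 K \<alpha> * vnorm2 n (projperp n Z S \<mu>) / \<alpha> + u * gL K \<alpha>)))
      + (1 / (2 * \<delta>)) * ((ln (card (models p u) + 1) + 2) * (4 * Kz\<^sup>2 + 1))"
proof -
  interpret perN2 n p Z u \<alpha> K \<mu> M \<xi> \<zeta> Kz by (intro perN2.intro perN.intro perN2_axioms.intro) (rule assms)+
  have "ln (card Mods + 1) / lam + 2 / lam = (ln (card Mods + 1) + 2) * (4 * Kz\<^sup>2 + 1)"
    unfolding lam_def by (simp add: field_simps)
  then show ?thesis using part2_int[of S t \<delta>] assms unfolding Mods_def wt_def resid_def consts_eq by simp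
qed



lemma powr_eventually_ge:
  assumes "\<tau> > 0"
  shows "eventually (\<lambda>n. C \<le> real n powr \<tau>) sequentially"
proof -
  define D where "D = max 1 C"
  define N where "N = nat \<lceil>D powr (1 / \<tau>)\<rceil>"
  show ?thesis
  proof (rule eventually_sequentiallyI[of N])
    fix n assume "N \<le> n"
    then have "D powr (1 / \<tau>) \<le> real n" unfolding N_def by linarith
    then have "(D powr (1 / \<tau>)) powr \<tau> \<le> real n powr \<tau>"
      using assms by (intro powr_mono2) auto
    also have "(D powr (1 / \<tau>)) powr \<tau> = D" using assms unfolding D_def by (simp add: powr_powr)
    finally show "C \<le> real n powr \<tau>" unfolding D_def by simp
  qed
qed

lemma card_models_exp: "real (card (models p u)) \<le> exp (real u * ln (real p))"
proof -
  have "real (card (models p u)) \<le> real (p ^ u)" using card_models by (subst of_nat_le_iff) 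
  also have "\<dots> \<le> exp (real u * ln (real p))"
  proof (cases "p = 0")
    case True then show ?thesis by (cases u) auto
  next
    case False
    then have "exp (real u * ln (real p)) = exp (ln (real p)) ^ u" by (subst exp_of_nat_mult) simp
    also have "\<dots> = real p ^ u" using False by simp
    finally show ?thesis by simp
  qed
  finally show ?thesis .
qed

lemma ln_nat_nonneg: "ln (real (p::nat)) \<ge> 0"
  by (cases "p = 0") auto

lemma extend_models:
  assumes "S \<in> models p s" "s \<le> u" "u \<le> p"
  shows "\<exists>S'. S \<subseteq> S' \<and> S' \<in> models p u"
proof -
  have Ssub: "S \<subseteq> {0..<p}" and cS: "card S = s" using assms(1) unfolding models_def by auto
  have "card ({0..<p} - S) = p - s" using Ssub cS by (simp add: card_Diff_subset finite_subset)
  then have "u - s \<le> card ({0..<p} - S)" using assms by simp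
  then obtain T where T: "T \<subseteq> {0..<p} - S" "card T = u - s" "finite T"
    by (rule obtain_subset_with_card_n)
  have fS: "finite S" using Ssub finite_subset by blast
  have "card (S \<union> T) = s + (u - s)" using T fS cS by (subst card_Un_disjoint) auto
  then have "S \<union> T \<in> models p u" using T Ssub assms(2) unfolding models_def by auto
  then show ?thesis by blast
qed

theorem mainTheorem3:
  fixes \<tau> \<alpha> K\<^sub>\<xi> K\<^sub>\<zeta> :: real
    and p s u :: "nat \<Rightarrow> nat"
    and \<mu> :: "nat \<Rightarrow> nat \<Rightarrow> real"
    and Z :: "nat \<Rightarrow> nat \<Rightarrow> nat \<Rightarrow> real"
    and M :: "nat \<Rightarrow> 'a measure"
    and \<xi> \<zeta> :: "nat \<Rightarrow> 'a \<Rightarrow> nat \<Rightarrow> real"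
  assumes tau: "0 < \<tau>" "\<tau> \<le> 1"
    and prob: "\<And>n. prob_space (M n)"
    and xi_sg: "\<And>n. subgaussian (M n) n (\<xi> n) K\<^sub>\<xi>"
    and mu_bound: "(\<lambda>n. vnorm2 n (\<mu> n)) \<in> O(\<lambda>n. real n)"
    and sparse: "weakly_sparse \<mu> Z p s (\<lambda>n. real n powr \<tau>)"
    and u_ge_s: "eventually (\<lambda>n. s n \<le> u n) sequentially"
    and u_small: "(\<lambda>n. real (u n)) \<in> o(\<lambda>n. real n powr \<tau> / ln (real (p n)))"
    and alpha: "\<alpha> > 4 * K\<^sub>\<xi>\<^sup>2"
    and zeta_sg: "\<And>n. subgaussian (M n) n (\<zeta> n) K\<^sub>\<zeta>"
  shows "((\<lambda>n. \<integral>\<omega>. (\<Sum>m\<in>models (p n) (u n).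
             expweight n (p n) (Z n) (u n) \<alpha> (\<lambda>i. \<mu> n i + \<xi> n \<omega> i) m
               * vnorm2 n (projperp n (Z n) m (\<mu> n))) \<partial>M n)
           \<in> o(\<lambda>n. real n powr \<tau>)) \<and>
         ((\<lambda>n. \<integral>\<omega>. (\<Sum>m\<in>models (p n) (u n).
             expweight n (p n) (Z n) (u n) \<alpha> (\<lambda>i. \<mu> n i + \<xi> n \<omega> i) m
               * vinner n (\<mu> n) (projperp n (Z n) m (\<zeta> n \<omega>))) \<partial>M n)
           \<in> o(\<lambda>n. real n powr \<tau>))"
proof -
  define P where "P = (\<lambda>n. real n powr \<tau>)"
  have P0: "P n \<ge> 0" for n unfolding P_def by simp
  have Pge: "eventually (\<lambda>n. C \<le> P n) sequentially" for C
    unfolding P_def by (rule powr_eventually_ge[OF tau(1)])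
  have ap: "\<alpha> > 0" using alpha by (smt (verit) zero_le_power2)
  note gc = gconsts[OF alpha]
  obtain S where S: "\<And>n. S n \<in> models (p n) (s n)"
    and So: "(\<lambda>n. vnorm2 n (projperp n (Z n) (S n) (\<mu> n))) \<in> o(\<lambda>n. real n powr \<tau>)"
    using sparse unfolding weakly_sparse_def by blast
  define b0 where "b0 n = vnorm2 n (projperp n (Z n) (S n) (\<mu> n))" for n
  have b0small: "eventually (\<lambda>n. b0 n \<le> e * P n) sequentially" if "e > 0" for e
    using landau_o.smallD[OF So that]
    by eventually_elim (simp add: b0_def P_def abs_of_nonneg vnorm2_nonneg)
  have ulp: "eventually (\<lambda>n. real (u n) * ln (real (p n)) \<le> e * P n) sequentially" if e: "e > 0" for e
    using landau_o.smallD[OF u_small e]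
  proof eventually_elim
    case (elim n)
    show ?case
    proof (cases "p n \<ge> 2")
      case True
      then have lp: "ln (real (p n)) > 0" by simp
      have "real (u n) \<le> e * (P n / ln (real (p n)))" using elim lp P0[of n] unfolding P_def by simp
      then have "real (u n) * ln (real (p n)) \<le> e * (P n / ln (real (p n))) * ln (real (p n))"
        using lp by (intro mult_right_mono) auto
      then show ?thesis using lp by simp
    next
      case False
      then have "p n = 0 \<or> p n = 1" by auto
      then have "ln (real (p n)) = 0" by auto
      then show ?thesis using e P0[of n] by simp
    qed
  qed
  have usm: "eventually (\<lambda>n. real (u n) \<le> e * P n) sequentially" if e: "e > 0" for e
  proof -
    have e2: "e * ln 2 > 0" using e by simp
    show ?thesis using landau_o.smallD[OF u_small e2]
    proof eventually_elim
      case (elim n)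
      show ?case
      proof (cases "p n \<ge> 2")
        case True
        then have lp: "ln (real (p n)) \<ge> ln 2" by simp
        have lp0: "ln (real (p n)) > 0" using True by simp
        have "real (u n) \<le> e * ln 2 * (P n / ln (real (p n)))" using elim lp0 P0[of n] unfolding P_def by simp
        also have "\<dots> \<le> e * ln (real (p n)) * (P n / ln (real (p n)))"
          using lp e P0[of n] lp0 by (intro mult_right_mono mult_left_mono) auto
        also have "\<dots> = e * P n" using lp0 by simp
        finally show ?thesis .
      next
        case False
        then have "p n = 0 \<or> p n = 1" by auto
        then have "ln (real (p n)) = 0" by auto
        then have "real (u n) \<le> 0" using elim by simp
        then show ?thesis using e P0[of n] by simp
      qed
    qed
  qed
  have key: "eventually (\<lambda>n. \<forall>b t. 0 \<le> b \<longrightarrow> b \<le> b0 n \<longrightarrow> e * P n \<le> t \<longrightarrow>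
      real (card (models (p n) (u n))) * exp (- gc1 K\<^sub>\<xi> \<alpha> * t / (2 * \<alpha>) + gc2 K\<^sub>\<xi> \<alpha> * b / \<alpha> + u n * gL K\<^sub>\<xi> \<alpha>) \<le> 1)
      sequentially" if e: "e > 0" for e
  proof -
    define \<kappa> where "\<kappa> = gc1 K\<^sub>\<xi> \<alpha> * e / (2 * \<alpha>)"
    have kp: "\<kappa> > 0" unfolding \<kappa>_def using gc e ap by simp
    have e1: "\<kappa> / 3 > 0" "\<kappa> * \<alpha> / (3 * gc2 K\<^sub>\<xi> \<alpha>) > 0" "\<kappa> / (3 * (gL K\<^sub>\<xi> \<alpha> + 1)) > 0"
      using kp ap gc by auto
    show ?thesis using ulp[OF e1(1)] b0small[OF e1(2)] usm[OF e1(3)]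
    proof eventually_elim
      case (elim n)
      show ?case
      proof (intro allI impI)
        fix b t assume b: "0 \<le> b" "b \<le> b0 n" and t: "e * P n \<le> t"
        have A: "real (u n) * ln (real (p n)) \<le> \<kappa> / 3 * P n" using elim by simp
        have B: "gc2 K\<^sub>\<xi> \<alpha> * b / \<alpha> \<le> \<kappa> / 3 * P n"
        proof -
          have "gc2 K\<^sub>\<xi> \<alpha> * b / \<alpha> \<le> gc2 K\<^sub>\<xi> \<alpha> * (\<kappa> * \<alpha> / (3 * gc2 K\<^sub>\<xi> \<alpha>) * P n) / \<alpha>"
            using b elim gc ap by (intro divide_right_mono mult_left_mono) auto
          also have "\<dots> = \<kappa> / 3 * P n" using gc ap by (simp add: field_simps)
          finally show ?thesis .
        qed
        have C: "u n * gL K\<^sub>\<xi> \<alpha> \<le> \<kappa> / 3 * P n"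
        proof -
          have "u n * gL K\<^sub>\<xi> \<alpha> \<le> u n * (gL K\<^sub>\<xi> \<alpha> + 1)" by (intro mult_left_mono) auto
          also have "\<dots> \<le> \<kappa> / (3 * (gL K\<^sub>\<xi> \<alpha> + 1)) * P n * (gL K\<^sub>\<xi> \<alpha> + 1)"
            using elim gc by (intro mult_right_mono) auto
          also have "\<dots> = \<kappa> / 3 * P n" using gc by (simp add: field_simps)
          finally show ?thesis .
        qed
        have D: "- gc1 K\<^sub>\<xi> \<alpha> * t / (2 * \<alpha>) \<le> - \<kappa> * P n"
        proof -
          have "\<kappa> * P n = gc1 K\<^sub>\<xi> \<alpha> * (e * P n) / (2 * \<alpha>)" unfolding \<kappa>_def by simp
          also have "\<dots> \<le> gc1 K\<^sub>\<xi> \<alpha> * t / (2 * \<alpha>)"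
            using t gc ap by (intro divide_right_mono mult_left_mono) auto
          finally show ?thesis by simp
        qed
        have "real (card (models (p n) (u n))) * exp (- gc1 K\<^sub>\<xi> \<alpha> * t / (2 * \<alpha>) + gc2 K\<^sub>\<xi> \<alpha> * b / \<alpha> + u n * gL K\<^sub>\<xi> \<alpha>)
            \<le> exp (real (u n) * ln (real (p n))) * exp (- gc1 K\<^sub>\<xi> \<alpha> * t / (2 * \<alpha>) + gc2 K\<^sub>\<xi> \<alpha> * b / \<alpha> + u n * gL K\<^sub>\<xi> \<alpha>)"
          by (intro mult_right_mono card_models_exp) auto
        also have "\<dots> = exp (real (u n) * ln (real (p n)) + (- gc1 K\<^sub>\<xi> \<alpha> * t / (2 * \<alpha>) + gc2 K\<^sub>\<xi> \<alpha> * b / \<alpha> + u n * gL K\<^sub>\<xi> \<alpha>))"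
          by (simp add: exp_add)
        also have "\<dots> \<le> exp 0" using A B C D by (intro exp_mono) linarith
        finally show "real (card (models (p n) (u n))) * exp (- gc1 K\<^sub>\<xi> \<alpha> * t / (2 * \<alpha>) + gc2 K\<^sub>\<xi> \<alpha> * b / \<alpha> + u n * gL K\<^sub>\<xi> \<alpha>) \<le> 1"
          by simp
      qed
    qed
  qed
  have ext: "\<exists>S'. S' \<in> models (p n) (u n) \<and> vnorm2 n (projperp n (Z n) S' (\<mu> n)) \<le> b0 n"
    if su: "s n \<le> u n" "u n \<le> p n" for n
  proof -
    obtain S' where S': "S n \<subseteq> S'" "S' \<in> models (p n) (u n)" using extend_models[OF S su] by blast
    have "vnorm2 n (projperp n (Z n) S' (\<mu> n)) \<le> b0 n"
      unfolding b0_def by (rule projperp_mono[OF models_elem_finite[OF S'(2)] S'(1)])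
    then show ?thesis using S' by blast
  qed
  have empty: "models (p n) (u n) = {}" if nle: "\<not> u n \<le> p n" for n
  proof -
    have cne: "card m \<noteq> u n" if msub: "m \<subseteq> {0..<p n}" for m
    proof -
      have "card m \<le> card {0..<p n}" by (rule card_mono) (use msub in auto)
      then show ?thesis using nle by simp
    qed
    show ?thesis unfolding models_def using cne by blast
  qed
  show ?thesis
  proof
    show "(\<lambda>n. \<integral>\<omega>. (\<Sum>m\<in>models (p n) (u n).
             expweight n (p n) (Z n) (u n) \<alpha> (\<lambda>i. \<mu> n i + \<xi> n \<omega> i) m
               * vnorm2 n (projperp n (Z n) m (\<mu> n))) \<partial>M n)
           \<in> o(\<lambda>n. real n powr \<tau>)"
    proof (rule landau_o.smallI)
      fix e :: real assume e: "e > 0"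
      have e2: "e / 2 > 0" using e by simp
      show "eventually (\<lambda>n. norm (\<integral>\<omega>. (\<Sum>m\<in>models (p n) (u n).
             expweight n (p n) (Z n) (u n) \<alpha> (\<lambda>i. \<mu> n i + \<xi> n \<omega> i) m
               * vnorm2 n (projperp n (Z n) m (\<mu> n))) \<partial>M n) \<le> e * norm (real n powr \<tau>)) sequentially"
        using key[OF e2] Pge[of "4 * \<alpha> / (gc1 K\<^sub>\<xi> \<alpha> * e)"] u_ge_s
      proof eventually_elim
        case (elim n)
        show ?case
        proof (cases "u n \<le> p n")
          case False
          then show ?thesis using empty[OF False] e by simp
        next
          case True
          obtain S' where S': "S' \<in> models (p n) (u n)" "vnorm2 n (projperp n (Z n) S' (\<mu> n)) \<le> b0 n"
            using ext[OF elim(3) True] by blast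
          define t where "t = e / 2 * P n"
          define E where "E = exp (- gc1 K\<^sub>\<xi> \<alpha> * t / (2 * \<alpha>) + gc2 K\<^sub>\<xi> \<alpha> * vnorm2 n (projperp n (Z n) S' (\<mu> n)) / \<alpha>
              + u n * gL K\<^sub>\<xi> \<alpha>)"
          have t0: "0 \<le> t" unfolding t_def using e P0[of n] by simp
          have cE: "card (models (p n) (u n)) * E \<le> 1"
            unfolding E_def
            by (rule elim(1)[rule_format, OF vnorm2_nonneg S'(2)]) (simp add: t_def)
          have "\<bar>\<integral>\<omega>. (\<Sum>m\<in>models (p n) (u n).
             expweight n (p n) (Z n) (u n) \<alpha> (\<lambda>i. \<mu> n i + \<xi> n \<omega> i) m
               * vnorm2 n (projperp n (Z n) m (\<mu> n))) \<partial>M n\<bar> \<le> t + card (models (p n) (u n)) * ((2 * \<alpha> / gc1 K\<^sub>\<xi> \<alpha>) * E)"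
            unfolding E_def by (rule part1_glob[OF prob xi_sg alpha S'(1) t0])
          also have "card (models (p n) (u n)) * ((2 * \<alpha> / gc1 K\<^sub>\<xi> \<alpha>) * E) = (2 * \<alpha> / gc1 K\<^sub>\<xi> \<alpha>) * (card (models (p n) (u n)) * E)"
            by simp
          also have "\<dots> \<le> (2 * \<alpha> / gc1 K\<^sub>\<xi> \<alpha>) * 1" using cE gc ap by (intro mult_left_mono) auto
          also have "2 * \<alpha> / gc1 K\<^sub>\<xi> \<alpha> * 1 \<le> e / 2 * P n"
          proof -
            have "2 * \<alpha> / gc1 K\<^sub>\<xi> \<alpha> = e / 2 * (4 * \<alpha> / (gc1 K\<^sub>\<xi> \<alpha> * e))" using e gc by (simp add: field_simps)
            also have "\<dots> \<le> e / 2 * P n" using elim(2) e by (intro mult_left_mono) auto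
            finally show ?thesis by simp
          qed
          finally have "\<bar>\<integral>\<omega>. (\<Sum>m\<in>models (p n) (u n).
             expweight n (p n) (Z n) (u n) \<alpha> (\<lambda>i. \<mu> n i + \<xi> n \<omega> i) m
               * vnorm2 n (projperp n (Z n) m (\<mu> n))) \<partial>M n\<bar> \<le> e * P n" unfolding t_def by simp
          then show ?thesis unfolding P_def by simp
        qed
      qed
    qed
    show "(\<lambda>n. \<integral>\<omega>. (\<Sum>m\<in>models (p n) (u n).
             expweight n (p n) (Z n) (u n) \<alpha> (\<lambda>i. \<mu> n i + \<xi> n \<omega> i) m
               * vinner n (\<mu> n) (projperp n (Z n) m (\<zeta> n \<omega>))) \<partial>M n)
           \<in> o(\<lambda>n. real n powr \<tau>)"
    proof (rule landau_o.smallI)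
      fix e :: real assume e: "e > 0"
      define K4 where "K4 = 4 * K\<^sub>\<zeta>\<^sup>2 + 1"
      have K4: "K4 > 0" unfolding K4_def using zero_le_power2[of K\<^sub>\<zeta>] by linarith
      define f where "f = e\<^sup>2 / (16 * K4)"
      have f: "f > 0" unfolding f_def using e K4 by simp
      have one: "(1::real) > 0" by simp
      show "eventually (\<lambda>n. norm (\<integral>\<omega>. (\<Sum>m\<in>models (p n) (u n).
             expweight n (p n) (Z n) (u n) \<alpha> (\<lambda>i. \<mu> n i + \<xi> n \<omega> i) m
               * vinner n (\<mu> n) (projperp n (Z n) m (\<zeta> n \<omega>))) \<partial>M n) \<le> e * norm (real n powr \<tau>)) sequentially"
        using key[OF one] Pge[of "2 * \<alpha> / gc1 K\<^sub>\<xi> \<alpha>"] Pge[of "(ln 2 + 2) / f"] ulp[OF f] u_ge_s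
      proof eventually_elim
        case (elim n)
        show ?case
        proof (cases "u n \<le> p n")
          case False
          then show ?thesis using empty[OF False] e by simp
        next
          case True
          obtain S' where S': "S' \<in> models (p n) (u n)" "vnorm2 n (projperp n (Z n) S' (\<mu> n)) \<le> b0 n"
            using ext[OF elim(5) True] by blast
          define E where "E = exp (- gc1 K\<^sub>\<xi> \<alpha> * P n / (2 * \<alpha>) + gc2 K\<^sub>\<xi> \<alpha> * vnorm2 n (projperp n (Z n) S' (\<mu> n)) / \<alpha>
              + u n * gL K\<^sub>\<xi> \<alpha>)"
          define cm where "cm = real (card (models (p n) (u n)))"
          have cE: "cm * E \<le> 1"
            unfolding E_def cm_def
            by (rule elim(1)[rule_format, OF vnorm2_nonneg S'(2)]) simp
          have d: "e / 4 > 0" using e by simp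
          have mono: "\<And>x y. x \<le> y \<Longrightarrow> 2 * (x * K4) / e \<le> 2 * (y * K4) / e"
            using e K4 by (intro divide_right_mono mult_left_mono mult_right_mono) auto
          have "\<bar>\<integral>\<omega>. (\<Sum>m\<in>models (p n) (u n).
             expweight n (p n) (Z n) (u n) \<alpha> (\<lambda>i. \<mu> n i + \<xi> n \<omega> i) m
               * vinner n (\<mu> n) (projperp n (Z n) m (\<zeta> n \<omega>))) \<partial>M n\<bar>
              \<le> e / 4 / 2 * (P n + cm * ((2 * \<alpha> / gc1 K\<^sub>\<xi> \<alpha>) * E))
                + (1 / (2 * (e / 4))) * ((ln (real (card (models (p n) (u n)) + 1)) + 2) * K4)"
            unfolding E_def cm_def K4_def
            by (rule part2_glob[OF prob xi_sg alpha S'(1) P0[of n] zeta_sg d, where Z="Z n" and \<mu>="\<mu> n"])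
          also have "cm * ((2 * \<alpha> / gc1 K\<^sub>\<xi> \<alpha>) * E) \<le> P n"
          proof -
            have "cm * ((2 * \<alpha> / gc1 K\<^sub>\<xi> \<alpha>) * E) = (2 * \<alpha> / gc1 K\<^sub>\<xi> \<alpha>) * (cm * E)" by simp
            also have "\<dots> \<le> (2 * \<alpha> / gc1 K\<^sub>\<xi> \<alpha>) * 1" using cE gc ap by (intro mult_left_mono) auto
            finally show ?thesis using elim(2) by simp
          qed
          also have "ln (real (card (models (p n) (u n)) + 1)) \<le> real (u n) * ln (real (p n)) + ln 2"
          proof -
            have x0: "real (u n) * ln (real (p n)) \<ge> 0" using ln_nat_nonneg by simp
            have "cm + 1 \<le> exp (real (u n) * ln (real (p n))) + 1" unfolding cm_def using card_models_exp by simp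
            also have "\<dots> \<le> 2 * exp (real (u n) * ln (real (p n)))" using x0 by simp
            finally have "ln (real (card (models (p n) (u n)) + 1)) \<le> ln (2 * exp (real (u n) * ln (real (p n))))"
              unfolding cm_def by (intro ln_mono) auto
            also have "\<dots> = ln 2 + real (u n) * ln (real (p n))" by (simp add: ln_mult)
            finally show ?thesis by simp
          qed
          also have "real (u n) * ln (real (p n)) + ln 2 + 2 \<le> 2 * f * P n"
            using elim(3,4) f by (simp add: field_simps)
          also have "e / 4 / 2 * (P n + P n) + 1 / (2 * (e / 4)) * (2 * f * P n * K4) = e / 2 * P n"
            unfolding f_def using e K4 by (simp add: field_simps power2_eq_square)
          finally have "\<bar>\<integral>\<omega>. (\<Sum>m\<in>models (p n) (u n).
             expweight n (p n) (Z n) (u n) \<alpha> (\<lambda>i. \<mu> n i + \<xi> n \<omega> i) m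
               * vinner n (\<mu> n) (projperp n (Z n) m (\<zeta> n \<omega>))) \<partial>M n\<bar> \<le> e / 2 * P n"
            using e K4 mono by (auto intro!: mult_right_mono add_mono mult_left_mono)
          also have "\<dots> \<le> e * P n" using e P0[of n] by simp
          finally show ?thesis unfolding P_def by simp
        qed
      qed
    qed
  qed
qed


end
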